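(* Let $m,u\in\mathbb{Q}$ with $m>0$, $u>0$, $mu<1$, and put $n=m(m^2+1)\bigl(2u-m(u^2-1)\bigr)$. Define $$Q_{m,u}(t)=4m\,(mu^2-m-2u)\,(mt^2-2t-m)\Bigl[(mu^2-m-2u)t^2+(-4mu-2u^2+2)t-mu^2+m+2u\Bigr].$$ (i) Sending a triangle to the rational angle parameter $t$ of its angle $\alpha$ gives a bijection between hyperbolic Heron triangles (up to congruence respecting the labelling of vertices) whose area has rational parameter $m$ and whose angle $\beta$ has rational parameter $u$, and the rational numbers $t$ with $$0<t<\frac{1-mu}{m+u}\qquad\text{(condition (A))}$$ for which $Q_{m,u}(t)=w^2$ for some rational $w>0$. Here $w=(m^2+1)(u^2+1)(t^2+1)\,\sinh(a)\sin(\beta)\sin(\gamma)$. (ii) The affine curve $w^2=Q_{m,u}(t)$ is birational over $\mathbb{Q}$ to the elliptic curve $$E_{m,u}:\ y^2=x\,(x-n)\,\bigl(x-n(u^2+1)\bigr),$$ via a birational map under which $$x=\frac{2u-m(u^2-1)}{4t^2}\Bigl[-4(mu-1)(m+u)mt+2(m^2u^2+m^2-2mu+2)mt^2+2\bigl(2u-m(u^2-1)\bigr)m^2+mw\Bigr],$$ $$t=-\frac{m\bigl(2u-m(u^2-1)\bigr)\bigl(x-(m+u)^2(m^2+1)\bigr)}{y+(m+u)(1-mu)(x-n)}.$$ Consequently these hyperbolic Heron triangles are in one-to-one correspondence with the rational points $(x,y)$ of $E_{m,u}$ off the line $y+(m+u)(1-mu)(x-n)=0$ that satisfy condition (A) for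 the value of $t$ above (together with the sign condition corresponding to $w>0$), with at most one further explicit point of $E_{m,u}$, namely $P=\bigl((m^2+1)(m+u)^2,\;u^2(m^2+1)^2(m+u)(mu-1)\bigr)$, possibly arising from the line.
   Context: All triangles are non-degenerate, bounded triangles in the hyperbolic plane (curvature $-1$), with side lengths $a,b,c>0$, opposite angles $\alpha,\beta,\gamma>0$, and area $A=\pi-\alpha-\beta-\gamma$. A length $x$ is called rational if $e^x\in\mathbb{Q}$; an angle or area $x$ is called rational if $e^{ix}\in\mathbb{Q}[i]$, i.e. $\cos x,\sin x\in\mathbb{Q}$. A hyperbolic Heron triangle is one with $e^a,e^b,e^c\in\mathbb{Q}$ and $e^{i\alpha},e^{i\beta},e^{i\gamma},e^{iA}\in\mathbb{Q}[i]$. For a rational angle or area $x\in(0,\pi)$, its rational parameter is the unique $t\in\mathbb{Q}$, $t>0$, with $\cos x=\frac{1-t^2}{1+t^2}$ and $\sin x=\frac{2t}{1+t^2}$ (i.e. $t=\tan(x/2)$); "rational area $m$" means the area has rational parameter $m$, and "rational angle $u$" means the angle has rational parameter $u$. *)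

theory Defs
  imports "HOL-Analysis.Analysis"
begin

section \<open>Hyperbolic triangles (up to labelled congruence = side-length triples)\<close>

definition hyp_triangle :: "real \<Rightarrow> real \<Rightarrow> real \<Rightarrow> bool" where
  "hyp_triangle a b c \<longleftrightarrow> a > 0 \<and> b > 0 \<and> c > 0 \<and> a < b + c \<and> b < a + c \<and> c < a + b"

text \<open>Angle opposite side a (hyperbolic law of cosines, curvature -1).\<close>
definition hangle :: "real \<Rightarrow> real \<Rightarrow> real \<Rightarrow> real" where
  "hangle a b c = arccos ((cosh b * cosh c - cosh a) / (sinh b * sinh c))"

definition halpha :: "real \<Rightarrow> real \<Rightarrow> real \<Rightarrow> real" where "halpha a b c = hangle a b c"
definition hbeta  :: "real \<Rightarrow> real \<Rightarrow> real \<Rightarrow> real" where "hbeta a b c = hangle b c a"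
definition hgamma :: "real \<Rightarrow> real \<Rightarrow> real \<Rightarrow> real" where "hgamma a b c = hangle c a b"
definition harea :: "real \<Rightarrow> real \<Rightarrow> real \<Rightarrow> real" where
  "harea a b c = pi - halpha a b c - hbeta a b c - hgamma a b c"

definition rat_length :: "real \<Rightarrow> bool" where "rat_length x \<longleftrightarrow> exp x \<in> \<rat>"
definition rat_angle :: "real \<Rightarrow> bool" where "rat_angle x \<longleftrightarrow> cos x \<in> \<rat> \<and> sin x \<in> \<rat>"

definition heron :: "real \<Rightarrow> real \<Rightarrow> real \<Rightarrow> bool" where
  "heron a b c \<longleftrightarrow> hyp_triangle a b c \<and> rat_length a \<and> rat_length b \<and> rat_length c \<and>
     rat_angle (halpha a b c) \<and> rat_angle (hbeta a b c) \<and> rat_angle (hgamma a b c) \<and>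
     rat_angle (harea a b c)"

text \<open>x has rational parameter t (t = tan(x/2)).\<close>
definition has_rat_param :: "real \<Rightarrow> real \<Rightarrow> bool" where
  "has_rat_param x t \<longleftrightarrow> t \<in> \<rat> \<and> t > 0 \<and> cos x = (1 - t^2) / (1 + t^2) \<and> sin x = 2 * t / (1 + t^2)"

definition heron_mu :: "real \<Rightarrow> real \<Rightarrow> (real \<times> real \<times> real) set" where
  "heron_mu m u = {(a, b, c). heron a b c \<and> has_rat_param (harea a b c) m \<and> has_rat_param (hbeta a b c) u}"

definition kval :: "'a::field \<Rightarrow> 'a \<Rightarrow> 'a" where "kval m u = 2*u - m*(u^2 - 1)"
definition nval :: "'a::field \<Rightarrow> 'a \<Rightarrow> 'a" where "nval m u = m*(m^2+1)*kval m u"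
definition X0 :: "'a::field \<Rightarrow> 'a \<Rightarrow> 'a" where "X0 m u = (m+u)^2*(m^2+1)"
definition Lval :: "'a::field \<Rightarrow> 'a \<Rightarrow> 'a" where "Lval m u = (m+u)*(1 - m*u)"

definition Qpoly :: "'a::field \<Rightarrow> 'a \<Rightarrow> 'a \<Rightarrow> 'a" where
  "Qpoly m u t = 4*m*(m*u^2 - m - 2*u)*(m*t^2 - 2*t - m) *
     ((m*u^2 - m - 2*u)*t^2 + (-4*m*u - 2*u^2 + 2)*t - m*u^2 + m + 2*u)"

definition onC :: "'a::field \<Rightarrow> 'a \<Rightarrow> 'a \<Rightarrow> 'a \<Rightarrow> bool" where
  "onC m u t w \<longleftrightarrow> w^2 = Qpoly m u t"

definition onE :: "'a::field \<Rightarrow> 'a \<Rightarrow> 'a \<Rightarrow> 'a \<Rightarrow> bool" where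
  "onE m u x y \<longleftrightarrow> y^2 = x*(x - nval m u)*(x - nval m u*(u^2+1))"

definition Ppoly :: "'a::field \<Rightarrow> 'a \<Rightarrow> 'a \<Rightarrow> 'a" where
  "Ppoly m u t = -4*(m*u - 1)*(m+u)*m*t + 2*(m^2*u^2 + m^2 - 2*m*u + 2)*m*t^2 + 2*kval m u*m^2"

text \<open>Forward map (t,w) to (x,y); y is the value making the inverse formula for t hold.\<close>
definition phi_x :: "'a::field \<Rightarrow> 'a \<Rightarrow> 'a \<Rightarrow> 'a \<Rightarrow> 'a" where
  "phi_x m u t w = kval m u / (4*t^2) * (Ppoly m u t + m*w)"
definition phi_y :: "'a::field \<Rightarrow> 'a \<Rightarrow> 'a \<Rightarrow> 'a \<Rightarrow> 'a" where
  "phi_y m u t w = - m*kval m u*(phi_x m u t w - X0 m u)/t - Lval m u*(phi_x m u t w - nval m u)"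

text \<open>Inverse map (x,y) to (t,w); w is obtained by solving the formula for x.\<close>
definition line_val :: "'a::field \<Rightarrow> 'a \<Rightarrow> 'a \<Rightarrow> 'a \<Rightarrow> 'a" where
  "line_val m u x y = y + Lval m u*(x - nval m u)"
definition psi_t :: "'a::field \<Rightarrow> 'a \<Rightarrow> 'a \<Rightarrow> 'a \<Rightarrow> 'a" where
  "psi_t m u x y = - m*kval m u*(x - X0 m u) / line_val m u x y"
definition psi_w :: "'a::field \<Rightarrow> 'a \<Rightarrow> 'a \<Rightarrow> 'a \<Rightarrow> 'a" where
  "psi_w m u x y = (4*(psi_t m u x y)^2*x / kval m u - Ppoly m u (psi_t m u x y)) / m"

definition condA :: "real \<Rightarrow> real \<Rightarrow> real \<Rightarrow> bool" where
  "condA m u t \<longleftrightarrow> 0 < t \<and> t < (1 - m*u)/(m+u)"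

definition Ppt :: "real \<Rightarrow> real \<Rightarrow> real \<times> real" where
  "Ppt m u = ((m^2+1)*(m+u)^2, u^2*(m^2+1)^2*(m+u)*(m*u - 1))"

definition tri_t :: "real \<Rightarrow> real \<Rightarrow> real \<Rightarrow> real" where
  "tri_t a b c = tan (halpha a b c / 2)"
definition tri_w :: "real \<Rightarrow> real \<Rightarrow> real \<Rightarrow> real \<Rightarrow> real \<Rightarrow> real" where
  "tri_w m u a b c = (m^2+1)*(u^2+1)*((tri_t a b c)^2+1) * sinh a * sin (hbeta a b c) * sin (hgamma a b c)"

end

theory Submission
  imports Defs
begin

lemma fwd_id:
  fixes m u t w :: "'a::field_char_0"
  shows "4*(-m * kval m u*(kval m u * (Ppoly m u t + m * w) - 4 * t^2 * X0 m u) - t * Lval m u*(kval m u * (Ppoly m u t + m * w) - 4 * t^2 * nval m u))^2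
     - (kval m u * (Ppoly m u t + m * w))*((kval m u * (Ppoly m u t + m * w)) - 4 * t^2 * nval m u)*((kval m u * (Ppoly m u t + m * w)) - 4 * t^2 * nval m u*(u^2+1))
   = ((2 * m^8 * u^8 * t^2 - 2 * m^8 * u^8 - 4 * m^8 * u^7 * t - 4 * m^8 * u^6 * t^2 + 8 * m^8 * u^6 + 12 * m^8 * u^5 * t + 4 * m^8 * u^4 * t^2 - 12 * m^8 * u^4 - 12 * m^8 * u^3 * t - 4 * m^8 * u^2 * t^2 + 8 * m^8 * u^2 + 4 * m^8 * u * t + 2 * m^8 * t^2 - 2 * m^8 - 4 * m^7 * u^8 * t - 16 * m^7 * u^7 * t^2 + 16 * m^7 * u^7 + 40 * m^7 * u^6 * t + 32 * m^7 * u^5 * t^2 - 48 * m^7 * u^5 - 72 * m^7 * u^4 * t - 32 * m^7 * u^3 * t^2 + 48 * m^7 * u^3 + 40 * m^7 * u^2 * t + 16 * m^7 * u * t^2 - 16 * m^7 * u - 4 * m^7 * t + 28 * m^6 * u^7 * t + 56 * m^6 * u^6 * t^2 - 48 * m^6 * u^6 - 132 * m^6 * u^5 * t - 96 * m^6 * u^4 * t^2 + 96 * m^6 * u^4 + 132 * m^6 * u^3 * t + 56 * m^6 * u^2 * t^2 - 48 * m^6 * u^2 - 28 * m^6 * u * t - 72 * m^5 * u^6 * t - 96 * m^5 * u^5 * t^2 + 64 * m^5 * u^5 + 176 * m^5 * u^4 * t + 96 * m^5 * u^3 * t^2 - 64 * m^5 * u^3 - 72 * m^5 * u^2 * t + 4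 * m^4 * u^6 * t^2 + 80 * m^4 * u^5 * t + 56 * m^4 * u^4 * t^2 - 32 * m^4 * u^4 - 80 * m^4 * u^3 * t + 4 * m^4 * u^2 * t^2 - 16 * m^3 * u^5 * t^2 - 32 * m^3 * u^4 * t + 16 * m^3 * u^3 * t^2 + 16 * m^2 * u^4 * t^2) + (m^6 * u^6 - 3 * m^6 * u^4 + 3 * m^6 * u^2 - m^6 - 6 * m^5 * u^5 + 12 * m^5 * u^3 - 6 * m^5 * u + 12 * m^4 * u^4 - 12 * m^4 * u^2 - 8 * m^3 * u^3) * w)*(w^2 - Qpoly m u t)"
  unfolding kval_def nval_def X0_def Lval_def Ppoly_def Qpoly_def by algebra

lemma bwd_id:
  fixes m u x y :: "'a::field_char_0"
  shows "(4*(-m * kval m u*(x - X0 m u))^2 * x - kval m u*((2 * kval m u * m^2) * line_val m u x y^2 + (-4*(m * u - 1)*(m+u) * m)*(-m * kval m u*(x - X0 m u)) * line_val m u x y + (2*(m^2 * u^2 + m^2 - 2 * m * u + 2) * m)*(-m * kval m u*(x - X0 m u))^2))^2 - m^2 * kval m u^2*(4 * m*(m * u^2 - m - 2 * u)*(m*(-m * kval m u*(x - X0 m u))^2 - 2*(-m * kval m u*(x - X0 m u)) * line_val m u x y - m * line_val m u x y^2)*((m * u^2 - m - 2 * u)*(-m * kval m u*(x - X0 m u))^2 + (-4 * m * u - 2 * u^2 + 2)*(-m * kval m u*(x - X0 m u)) * line_val m u x y + (-m * u^2 + m + 2 * u) * line_val m u x y^2)) = (16 * m^20 * u^8 - 64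 * m^20 * u^6 + 96 * m^20 * u^4 - 64 * m^20 * u^2 + 16 * m^20 + 96 * m^19 * u^9 - 512 * m^19 * u^7 + 960 * m^19 * u^5 - 768 * m^19 * u^3 + 224 * m^19 * u + 240 * m^18 * u^10 - 1680 * m^18 * u^8 + 3936 * m^18 * u^6 - 3744 * m^18 * u^4 + 1200 * m^18 * u^2 + 48 * m^18 + 320 * m^17 * u^11 - 2912 * m^17 * u^9 + 8448 * m^17 * u^7 - 9280 * m^17 * u^5 + 2752 * m^17 * u^3 + 672 * m^17 * u + 240 * m^16 * u^12 - 2800 * m^16 * u^10 - 48 * m^16 * u^8 * x + 9744 * m^16 * u^8 + 192 * m^16 * u^6 * x - 11040 * m^16 * u^6 - 288 * m^16 * u^4 * x + 80 * m^16 * u^4 + 192 * m^16 * u^2 * x + 3984 * m^16 * u^2 - 48 * m^16 * x + 48 * m^16 + 96 * m^15 * u^13 - 1344 * m^15 * u^11 - 192 * m^15 * u^9 * x + 4704 * m^15 * u^9 + 1152 * m^15 * u^7 * x - 768 * m^15 * u^7 - 2304 * m^15 * u^5 * x - 14688 * m^15 * u^5 + 1920 * m^15 * u^3 * x + 12864 * m^15 * u^3 - 576 * m^15 * u * x + 672 * m^15 * u + 16 * m^14 * u^14 - 112 * m^14 * u^12 - 288 * m^14 * u^10 * x - 1680 * m^14 * u^10 + 2592 * m^14 * u^8 * x + 15344 * m^14 * u^8 - 7104 * m^14 * u^6 * x - 36752 * m^14 * u^6 + 7488 * m^14 * u^4 * x + 23664 * m^14 * u^4 - 2592 * m^14 *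 u^2 * x + 4112 * m^14 * u^2 - 96 * m^14 * x + 16 * m^14 + 160 * m^13 * u^13 - 192 * m^13 * u^11 * x - 3264 * m^13 * u^11 + 2688 * m^13 * u^9 * x + 19872 * m^13 * u^9 - 10368 * m^13 * u^7 * x - 42880 * m^13 * u^7 + 13824 * m^13 * u^5 * x + 21216 * m^13 * u^5 - 4800 * m^13 * u^3 * x + 14400 * m^13 * u^3 - 1152 * m^13 * u * x + 224 * m^13 * u + 48 * m^12 * u^14 - 48 * m^12 * u^12 * x - 1392 * m^12 * u^12 + 1152 * m^12 * u^10 * x + 10320 * m^12 * u^10 + 48 * m^12 * u^8 * x^2 - 6480 * m^12 * u^8 * x - 22176 * m^12 * u^8 - 192 * m^12 * u^6 * x^2 + 9984 * m^12 * u^6 * x - 3696 * m^12 * u^6 + 288 * m^12 * u^4 * x^2 + 432 * m^12 * u^4 * x + 31632 * m^12 * u^4 - 192 * m^12 * u^2 * x^2 - 5760 * m^12 * u^2 * x + 1392 * m^12 * u^2 + 48 * m^12 * x^2 - 48 * m^12 * x - 96 * m^11 * u^13 + 960 * m^11 * u^11 + 96 * m^11 * u^9 * x^2 + 192 * m^11 * u^9 * x + 2880 * m^11 * u^9 - 768 * m^11 * u^7 * x^2 - 4608 * m^11 * u^7 * x - 31872 * m^11 * u^7 + 1728 * m^11 * u^5 * x^2 + 17280 * m^11 * u^5 * x + 44576 * m^11 * u^5 - 1536 * m^11 * u^3 * x^2 - 15360 * m^11 * u^3 * x + 5056 * m^11 * u^3 + 480 * m^11 * u * x^2 - 576 * m^11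 * u * x + 48 * m^10 * u^14 - 96 * m^10 * u^12 * x - 1104 * m^10 * u^12 + 48 * m^10 * u^10 * x^2 + 2016 * m^10 * u^10 * x + 9696 * m^10 * u^10 - 912 * m^10 * u^8 * x^2 - 12480 * m^10 * u^8 * x - 35616 * m^10 * u^8 + 3552 * m^10 * u^6 * x^2 + 30144 * m^10 * u^6 * x + 38640 * m^10 * u^6 - 4512 * m^10 * u^4 * x^2 - 22752 * m^10 * u^4 * x + 11888 * m^10 * u^4 + 1776 * m^10 * u^2 * x^2 - 2976 * m^10 * u^2 * x + 48 * m^10 * x^2 - 288 * m^9 * u^13 + 576 * m^9 * u^11 * x + 4224 * m^9 * u^11 - 288 * m^9 * u^9 * x^2 - 6912 * m^9 * u^9 * x - 17856 * m^9 * u^9 + 2688 * m^9 * u^7 * x^2 + 21888 * m^9 * u^7 * x + 16512 * m^9 * u^7 - 5568 * m^9 * u^5 * x^2 - 16128 * m^9 * u^5 * x + 18912 * m^9 * u^5 + 2688 * m^9 * u^3 * x^2 - 8640 * m^9 * u^3 * x + 480 * m^9 * u * x^2 + 16 * m^8 * u^14 - 48 * m^8 * u^12 * x + 320 * m^8 * u^12 + 48 * m^8 * u^10 * x^2 - 576 * m^8 * u^10 * x - 2592 * m^8 * u^10 - 16 * m^8 * u^8 * x^3 + 192 * m^8 * u^8 * x^2 + 4320 * m^8 * u^8 * x - 2240 * m^8 * u^8 + 64 * m^8 * u^6 * x^3 - 1632 * m^8 * u^6 * x^2 + 960 * m^8 * u^6 * x + 20624 * m^8 * u^6 - 96 * m^8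 * u^4 * x^3 + 192 * m^8 * u^4 * x^2 - 15408 * m^8 * u^4 * x + 64 * m^8 * u^2 * x^3 + 1968 * m^8 * u^2 * x^2 - 16 * m^8 * x^3 - 128 * m^7 * u^13 + 384 * m^7 * u^11 * x + 1152 * m^7 * u^11 - 384 * m^7 * u^9 * x^2 - 2688 * m^7 * u^9 * x - 6528 * m^7 * u^9 + 128 * m^7 * u^7 * x^3 + 1920 * m^7 * u^7 * x^2 + 10368 * m^7 * u^7 * x + 15232 * m^7 * u^7 - 384 * m^7 * u^5 * x^3 - 4224 * m^7 * u^5 * x^2 - 17280 * m^7 * u^5 * x + 384 * m^7 * u^3 * x^3 + 4224 * m^7 * u^3 * x^2 - 128 * m^7 * u * x^3 + 384 * m^6 * u^12 - 1152 * m^6 * u^10 * x - 3072 * m^6 * u^10 + 1152 * m^6 * u^8 * x^2 + 6912 * m^6 * u^8 * x + 7296 * m^6 * u^8 - 384 * m^6 * u^6 * x^3 - 4608 * m^6 * u^6 * x^2 - 11904 * m^6 * u^6 * x + 768 * m^6 * u^4 * x^3 + 4992 * m^6 * u^4 * x^2 - 384 * m^6 * u^2 * x^3 - 512 * m^5 * u^11 + 1536 * m^5 * u^9 * x + 2048 * m^5 * u^9 - 1536 * m^5 * u^7 * x^2 - 4608 * m^5 * u^7 * x + 512 * m^5 * u^5 * x^3 + 3072 * m^5 * u^5 * x^2 - 512 * m^5 * u^3 * x^3 + 256 * m^4 * u^10 - 768 * m^4 * u^8 * x + 768 * m^4 * u^6 * x^2 - 256 * m^4 * u^4 * x^3)*(y^2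 - x*(x - nval m u)*(x - nval m u*(u^2+1)))"
  unfolding kval_def nval_def X0_def Lval_def line_val_def by algebra
lemma aux_E:
  fixes X Y t n nn :: "'a::field_char_0"
  assumes "t \<noteq> 0" "4* Y^2 = X*(X-4* t^2* n)*(X-4* t^2* nn)"
  shows "(Y/(4* t^3))^2 = X/(4* t^2)*(X/(4* t^2)-n)*(X/(4* t^2)-nn)"
proof -
  have "X/(4* t^2)*(X/(4* t^2)-n)*(X/(4* t^2)-nn) = X*(X-4* t^2* n)*(X-4* t^2* nn)/(64* t^6)"
    using assms(1) by (simp add: field_simps)
  also have "\<dots> = 4* Y^2/(64* t^6)" using assms(2) by simp
  also have "\<dots> = (Y/(4* t^3))^2" using assms(1) by (simp add: field_simps)
  finally show ?thesis by simp
qed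

lemma fwd:
  fixes m u t w :: "'a::field_char_0"
  assumes C: "onC m u t w" and t: "t \<noteq> 0"
  shows "onE m u (phi_x m u t w) (phi_y m u t w)"
proof -
  define X where "X = kval m u * (Ppoly m u t + m* w)"
  define Y where "Y = -m* kval m u*(X - 4* t^2* X0 m u) - t* Lval m u*(X - 4* t^2* nval m u)"
  have x: "phi_x m u t w = X/(4* t^2)" by (simp add: phi_x_def X_def)
  have y: "phi_y m u t w = Y/(4* t^3)" unfolding phi_y_def x Y_def using t
    by (simp add: field_simps) algebra
  have "4* Y^2 - X*(X - 4* t^2* nval m u)*(X - 4* t^2* nval m u*(u^2+1)) = 0"
    using fwd_id[of m u t w] C unfolding X_def Y_def onC_def by simp
  then have "4* Y^2 = X*(X - 4* t^2* nval m u)*(X - 4* t^2* nval m u*(u^2+1))" by simp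
  moreover have e: "4* t^2* nval m u*(u^2+1) = 4* t^2*(nval m u*(u^2+1))" by simp
  ultimately have "4* Y^2 = X*(X - 4* t^2* nval m u)*(X - 4* t^2*(nval m u*(u^2+1)))" by simp
  from aux_E[OF t this] show ?thesis unfolding onE_def x y .
qed

lemma fwd2:
  fixes m u t w :: "'a::field_char_0"
  assumes t: "t \<noteq> 0" and m: "m \<noteq> 0" and k: "kval m u \<noteq> 0" and x: "phi_x m u t w \<noteq> X0 m u"
  shows "line_val m u (phi_x m u t w) (phi_y m u t w) = - m* kval m u*(phi_x m u t w - X0 m u)/t"
    "line_val m u (phi_x m u t w) (phi_y m u t w) \<noteq> 0"
    "psi_t m u (phi_x m u t w) (phi_y m u t w) = t"
    "psi_w m u (phi_x m u t w) (phi_y m u t w) = w"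
proof -
  show l: "line_val m u (phi_x m u t w) (phi_y m u t w) = - m* kval m u*(phi_x m u t w - X0 m u)/t"
    unfolding line_val_def phi_y_def by simp
  have xx: "phi_x m u t w - X0 m u \<noteq> 0" using x by simp
  show "line_val m u (phi_x m u t w) (phi_y m u t w) \<noteq> 0" unfolding l using t m k xx by simp
  show pt: "psi_t m u (phi_x m u t w) (phi_y m u t w) = t"
    unfolding psi_t_def l using t m k xx by (simp add: field_simps)
  show "psi_w m u (phi_x m u t w) (phi_y m u t w) = w"
    unfolding psi_w_def pt unfolding phi_x_def using t m k by (simp add: field_simps)
qed

lemma bwd:
  fixes m u x y :: "'a::field_char_0"
  assumes E: "onE m u x y" and lv: "line_val m u x y \<noteq> 0" and pt: "psi_t m u x y \<noteq> 0"
    and m: "m \<noteq> 0" and k: "kval m u \<noteq> 0"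
  shows "onC m u (psi_t m u x y) (psi_w m u x y)"
    "phi_x m u (psi_t m u x y) (psi_w m u x y) \<noteq> X0 m u"
    "phi_x m u (psi_t m u x y) (psi_w m u x y) = x"
    "phi_y m u (psi_t m u x y) (psi_w m u x y) = y"
proof -
  define T where "T = -m* kval m u*(x - X0 m u)"
  define lv' where "lv' = line_val m u x y"
  have tdef: "psi_t m u x y = T/lv'" unfolding psi_t_def T_def lv'_def by simp
  have T0: "T \<noteq> 0" using pt tdef by auto
  have xX: "x \<noteq> X0 m u" using T0 unfolding T_def by auto
  show px: "phi_x m u (psi_t m u x y) (psi_w m u x y) = x"
    unfolding phi_x_def psi_w_def using pt m k by (simp add: field_simps)
  then show "phi_x m u (psi_t m u x y) (psi_w m u x y) \<noteq> X0 m u" using xX by simp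
  show "phi_y m u (psi_t m u x y) (psi_w m u x y) = y"
    unfolding phi_y_def px unfolding tdef T_def lv'_def using lv T0 unfolding T_def
    by (simp add: field_simps line_val_def)
  define W where "W = 4* T^2* x - kval m u*((2* kval m u* m^2)* lv'^2 + (-4*(m* u - 1)*(m+u)* m)* T* lv' + (2*(m^2* u^2 + m^2 - 2* m* u + 2)* m)* T^2)"
  define Qh where "Qh = 4* m*(m* u^2 - m - 2* u)*(m* T^2 - 2* T* lv' - m* lv'^2)*((m* u^2 - m - 2* u)* T^2 + (-4* m* u - 2* u^2 + 2)* T* lv' + (-m* u^2 + m + 2* u)* lv'^2)"
  have key: "W^2 - m^2* kval m u^2* Qh = 0"
    using bwd_id[of m u x y] E unfolding W_def Qh_def T_def lv'_def onE_def by simp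
  have lv0: "lv' \<noteq> 0" using lv lv'_def by simp
  have wq: "psi_w m u x y = W/(m* kval m u* lv'^2)"
    unfolding psi_w_def tdef W_def Ppoly_def using m k lv0 by (simp add: field_simps) algebra
  have qq: "Qpoly m u (psi_t m u x y) = Qh/lv'^4"
    unfolding Qpoly_def tdef Qh_def using lv0 by (simp add: field_simps) algebra
  show "onC m u (psi_t m u x y) (psi_w m u x y)"
    unfolding onC_def wq qq using key m k lv0 by (simp add: field_simps)
qed
definition Dg :: "real \<Rightarrow> real \<Rightarrow> real \<Rightarrow> real" where
  "Dg a b c = 1 + 2 * cosh a * cosh b * cosh c - (cosh a)^2 - (cosh b)^2 - (cosh c)^2"

lemma Dg_rot: "Dg b c a = Dg a b c" unfolding Dg_def by (simp add: algebra_simps)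

lemma tri_rot: "hyp_triangle a b c \<Longrightarrow> hyp_triangle b c a"
  unfolding hyp_triangle_def by linarith

lemma r_alg:
  fixes ca cb cc sb sc :: real
  assumes "sb * sc \<noteq> 0" "sb^2 = cb^2 - 1" "sc^2 = cc^2 - 1"
  shows "1 - ((cb * cc - ca)/(sb * sc))^2 = (1 + 2 * ca * cb * cc - ca^2 - cb^2 - cc^2)/(sb * sc)^2"
proof -
  have e: "(sb * sc)^2 = (cb^2 - 1) * (cc^2 - 1)" using assms by (simp add: power_mult_distrib)
  have "1 - ((cb * cc - ca)/(sb * sc))^2 = ((sb * sc)^2 - (cb * cc - ca)^2)/(sb * sc)^2"
    using assms(1) by (simp add: field_simps)
  also have "(sb * sc)^2 - (cb * cc - ca)^2 = (cb^2 - 1) * (cc^2 - 1) - (cb * cc - ca)^2" using e by simp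
  also have "\<dots> = 1 + 2 * ca * cb * cc - ca^2 - cb^2 - cc^2" by algebra
  finally show ?thesis .
qed

lemma hangle_facts:
  assumes T: "hyp_triangle a b c"
  shows "cos (hangle a b c) = (cosh b * cosh c - cosh a)/(sinh b * sinh c)"
    "sin (hangle a b c) = sqrt (Dg a b c)/(sinh b * sinh c)"
    "Dg a b c > 0" "0 < sin (hangle a b c)" "0 < hangle a b c" "hangle a b c < pi"
proof -
  have a: "a > 0" and b: "b > 0" and c: "c > 0" and t1: "a < b + c" and t2: "\<bar>b - c\<bar> < a"
    using T unfolding hyp_triangle_def by auto
  have sb: "sinh b > 0" and sc: "sinh c > 0" using b c by auto
  have "cosh a < cosh (b+c)" using t1 a b c by (simp add: cosh_real_nonneg_less_iff)
  then have u1: "cosh a < cosh b * cosh c + sinh b * sinh c" by (simp add: cosh_add)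
  have "cosh (b - c) < cosh a" using cosh_real_nonneg_less_iff[of "\<bar>b - c\<bar>" a] t2 a by simp
  then have u2: "cosh b * cosh c - sinh b * sinh c < cosh a" by (simp add: cosh_diff)
  define r where "r = (cosh b * cosh c - cosh a)/(sinh b * sinh c)"
  have p: "sinh b * sinh c > 0" using sb sc by simp
  have r1: "-1 < r" unfolding r_def using u1 p by (simp add: field_simps)
  have r2: "r < 1" unfolding r_def using u2 p by (simp add: field_simps)
  show cs: "cos (hangle a b c) = (cosh b * cosh c - cosh a)/(sinh b * sinh c)"
    unfolding hangle_def r_def[symmetric] using r1 r2 by simp
  have "1 - r^2 = Dg a b c/(sinh b * sinh c)^2"
    unfolding r_def Dg_def by (rule r_alg) (use p in \<open>auto simp: sinh_square_eq\<close>)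
  moreover have "1 - r^2 > 0" using r1 r2 by (simp add: abs_square_less_1)
  ultimately have D: "Dg a b c/(sinh b * sinh c)^2 > 0" by simp
  then show "Dg a b c > 0" using p by (simp add: zero_less_divide_iff)
  have "sin (hangle a b c) = sqrt (1 - r^2)" unfolding hangle_def r_def[symmetric]
    using r1 r2 by (simp add: sin_arccos)
  also have "\<dots> = sqrt (Dg a b c)/(sinh b * sinh c)"
    using \<open>1 - r^2 = Dg a b c/(sinh b * sinh c)^2\<close> p by (simp add: real_sqrt_divide)
  finally show ss: "sin (hangle a b c) = sqrt (Dg a b c)/(sinh b * sinh c)" .
  show "0 < sin (hangle a b c)" unfolding ss using D p by (simp add: zero_less_divide_iff)
  show "0 < hangle a b c" unfolding hangle_def r_def[symmetric]
    using r1 r2 arccos_lt_bounded by auto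
  show "hangle a b c < pi" unfolding hangle_def r_def[symmetric]
    using r1 r2 arccos_lt_bounded by auto
qed

lemma dual_alg:
  fixes ca cb cc sa sb sc :: real
  assumes "sa \<noteq> 0" "sb \<noteq> 0" "sc \<noteq> 0" "sa^2 = ca^2 - 1"
  shows "(cb * cc - ca)/(sb * sc) + (cc * ca - cb)/(sc * sa) * ((ca * cb - cc)/(sa * sb))
     = (1 + 2 * ca * cb * cc - ca^2 - cb^2 - cc^2)/(sa^2 * sb * sc) * ca"
proof -
  have "(cb * cc - ca)/(sb * sc) + (cc * ca - cb)/(sc * sa) * ((ca * cb - cc)/(sa * sb))
     = ((cb * cc - ca) * sa^2 + (cc * ca - cb)*(ca * cb - cc))/(sa^2 * sb * sc)"
    using assms by (simp add: field_simps power2_eq_square)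
  also have "\<dots> = ((cb * cc - ca)*(ca^2-1) + (cc * ca - cb)*(ca * cb - cc))/(sa^2 * sb * sc)"
    using assms by simp
  also have "\<dots> = (1 + 2 * ca * cb * cc - ca^2 - cb^2 - cc^2)/(sa^2 * sb * sc) * ca"
    by (simp add: field_simps power2_eq_square)
  finally show ?thesis .
qed

lemma dual_law:
  assumes T: "hyp_triangle a b c"
  shows "cos (hangle a b c) + cos (hangle b c a) * cos (hangle c a b)
       = sin (hangle b c a) * sin (hangle c a b) * cosh a"
proof -
  have T2: "hyp_triangle b c a" and T3: "hyp_triangle c a b" using tri_rot T by blast+
  have a: "a > 0" and b: "b > 0" and c: "c > 0" using T unfolding hyp_triangle_def by auto
  have sa: "sinh a > 0" and sb: "sinh b > 0" and sc: "sinh c > 0" using a b c by auto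
  note f1 = hangle_facts[OF T] and f2 = hangle_facts[OF T2] and f3 = hangle_facts[OF T3]
  have D2: "Dg b c a = Dg a b c" and D3: "Dg c a b = Dg a b c" using Dg_rot by metis+
  have sq: "sqrt (Dg a b c) * sqrt (Dg a b c) = Dg a b c" using f1(3) by simp
  have "sin (hangle b c a) * sin (hangle c a b) = Dg a b c/(sinh a^2 * sinh b * sinh c)"
    unfolding f2(2) f3(2) D2 D3 using sa sb sc sq by (simp add: field_simps power2_eq_square)
  moreover have "cos (hangle a b c) + cos (hangle b c a) * cos (hangle c a b)
     = Dg a b c/(sinh a^2 * sinh b * sinh c) * cosh a"
    unfolding f1(1) f2(1) f3(1) Dg_def
    by (rule dual_alg) (use sa sb sc in \<open>auto simp: sinh_square_eq\<close>)
  ultimately show ?thesis by simp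
qed
definition cpar :: "real \<Rightarrow> real" where "cpar x = (1-x^2)/(1+x^2)"
definition spar :: "real \<Rightarrow> real" where "spar x = 2 * x/(1+x^2)"
definition Rz :: "real \<Rightarrow> real \<Rightarrow> real \<Rightarrow> real" where "Rz t u m = 1 - t * u - t * m - u * m"
definition Iz :: "real \<Rightarrow> real \<Rightarrow> real \<Rightarrow> real" where "Iz t u m = t + u + m - t * u * m"
definition Nz :: "real \<Rightarrow> real \<Rightarrow> real \<Rightarrow> real" where "Nz t u m = (1+t^2) * (1+u^2) * (1+m^2)"
definition CGz :: "real \<Rightarrow> real \<Rightarrow> real \<Rightarrow> real" where "CGz t u m = -((Rz t u m)^2 - (Iz t u m)^2)/Nz t u m"
definition SGz :: "real \<Rightarrow> real \<Rightarrow> real \<Rightarrow> real" where "SGz t u m = 2 * Rz t u m * Iz t u m/Nz t u m"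

lemma one_plus_sq_pos: "1 + x^2 > (0::real)" by (simp add: add_pos_nonneg)
lemma one_plus_sq_nz: "1 + x^2 \<noteq> (0::real)" using one_plus_sq_pos[of x] by simp

lemma Nz_pos: "Nz t u m > 0" unfolding Nz_def using one_plus_sq_pos by simp

lemma half_param:
  assumes "0 < x" "x < pi"
  shows "cos x = cpar (tan (x/2))" "sin x = spar (tan (x/2))" "tan (x/2) > 0"
proof -
  have c: "cos (x/2) \<noteq> 0" using assms cos_gt_zero_pi[of "x/2"] by auto
  show "cos x = cpar (tan (x/2))" using cos_tan_half[OF c] by (simp add: cpar_def)
  show "sin x = spar (tan (x/2))" using sin_tan_half[of "x/2"] by (simp add: spar_def)
  show "tan (x/2) > 0" using assms by (intro tan_gt_zero) auto
qed

lemma arctan_param: "cos (2 * arctan t) = cpar t" "sin (2 * arctan t) = spar t"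
  using cos_tan_half[OF cos_arctan_not_zero, of t] sin_tan_half[of "arctan t"]
  by (simp_all add: tan_arctan cpar_def spar_def)

lemma t_from_param: "t = spar t/(1 + cpar t)"
proof -
  have "1 + cpar t = 2/(1+t^2)" unfolding cpar_def using one_plus_sq_nz[of t] by (simp add: field_simps)
  then show ?thesis unfolding spar_def using one_plus_sq_nz[of t] by (simp add: field_simps)
qed

lemma cpar_rat: "t \<in> \<rat> \<Longrightarrow> cpar t \<in> \<rat>" unfolding cpar_def by simp
lemma spar_rat: "t \<in> \<rat> \<Longrightarrow> spar t \<in> \<rat>" unfolding spar_def by simp

lemma trig_alg:
  fixes ct st cu su cm sm Dt Du Dm :: real
  assumes "Dt \<noteq> 0" "Du \<noteq> 0" "Dm \<noteq> 0"
  shows "-(((ct/Dt) * (cu/Du) - (st/Dt) * (su/Du)) * (cm/Dm) - ((st/Dt) * (cu/Du) + (ct/Dt) * (su/Du)) * (sm/Dm))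
       = -((ct * cu - st * su) * cm - (st * cu + ct * su) * sm)/(Dt * Du * Dm)"
    "((st/Dt) * (cu/Du) + (ct/Dt) * (su/Du)) * (cm/Dm) + ((ct/Dt) * (cu/Du) - (st/Dt) * (su/Du)) * (sm/Dm)
       = ((st * cu + ct * su) * cm + (ct * cu - st * su) * sm)/(Dt * Du * Dm)"
  using assms by (simp_all add: field_simps)

lemma trig3:
  assumes "cos x = cpar t" "sin x = spar t" "cos y = cpar u" "sin y = spar u" "cos z = cpar m" "sin z = spar m"
  shows "cos (pi - x - y - z) = CGz t u m" "sin (pi - x - y - z) = SGz t u m"
proof -
  have e: "pi - x - y - z = pi - (x + y + z)" by simp
  have p: "1+t^2 \<noteq> 0" "1+u^2 \<noteq> 0" "1+m^2 \<noteq> 0" using one_plus_sq_nz by auto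
  have "cos (pi - x - y - z) = -(((cpar t) * (cpar u) - (spar t) * (spar u)) * (cpar m) - ((spar t) * (cpar u) + (cpar t) * (spar u)) * (spar m))"
    unfolding e cos_pi_minus cos_add sin_add assms by simp
  also have "\<dots> = -(((1-t^2) * (1-u^2) - (2 * t) * (2 * u)) * (1-m^2) - ((2 * t) * (1-u^2) + (1-t^2) * (2 * u)) * (2 * m))/((1+t^2) * (1+u^2) * (1+m^2))"
    unfolding cpar_def spar_def by (rule trig_alg(1)[OF p])
  also have "\<dots> = CGz t u m" unfolding CGz_def Nz_def Rz_def Iz_def by (rule arg_cong[where f="\<lambda>v. v/_"]) algebra
  finally show "cos (pi - x - y - z) = CGz t u m" .
  have "sin (pi - x - y - z) = ((spar t) * (cpar u) + (cpar t) * (spar u)) * (cpar m) + ((cpar t) * (cpar u) - (spar t) * (spar u)) * (spar m)"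
    unfolding e sin_pi_minus cos_add sin_add assms by simp
  also have "\<dots> = (((2 * t) * (1-u^2) + (1-t^2) * (2 * u)) * (1-m^2) + ((1-t^2) * (1-u^2) - (2 * t) * (2 * u)) * (2 * m))/((1+t^2) * (1+u^2) * (1+m^2))"
    unfolding cpar_def spar_def by (rule trig_alg(2)[OF p])
  also have "\<dots> = SGz t u m" unfolding SGz_def Nz_def Rz_def Iz_def by (rule arg_cong[where f="\<lambda>v. v/_"]) algebra
  finally show "sin (pi - x - y - z) = SGz t u m" .
qed

lemma condA_SG:
  assumes "m > 0" "u > 0" "t > 0" "m * u < 1"
  shows "0 < SGz t u m \<longleftrightarrow> condA m u t"
proof -
  have I: "Iz t u m > 0" unfolding Iz_def
  proof -
    have "t * (u * m) < t * 1" using assms by (intro mult_strict_left_mono) (auto simp: mult.commute)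
    then have "t * u * m < t" by (simp add: mult.assoc)
    then show "0 < t + u + m - t * u * m" using assms by linarith
  qed
  have "0 < SGz t u m \<longleftrightarrow> 0 < Rz t u m" unfolding SGz_def using I Nz_pos[of t u m]
    by (simp add: zero_less_divide_iff zero_less_mult_iff)
  also have "\<dots> \<longleftrightarrow> t * (m + u) < 1 - m * u" unfolding Rz_def by (simp add: algebra_simps)
  also have "\<dots> \<longleftrightarrow> t < (1 - m * u)/(m + u)" using assms by (simp add: field_simps)
  finally show ?thesis unfolding condA_def using assms by simp
qed

lemma sum_lt:
  assumes "m > 0" "u > 0" "m * u < 1" "condA m u t"
  shows "arctan t + arctan u + arctan m < pi/2"
proof -
  have t: "t > 0" and tl: "t < (1 - m * u)/(m + u)" using assms unfolding condA_def by auto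
  have "u < 1/m" using assms by (simp add: field_simps mult.commute)
  then have "arctan u < arctan (1/m)" by (simp add: arctan_less_iff)
  also have "arctan (1/m) = sgn m * pi/2 - arctan m" using assms by (intro Transcendental.arctan_inverse) auto
  also have "sgn m * pi/2 - arctan m = pi/2 - arctan m" using assms by simp
  finally have s1: "arctan m + arctan u < pi/2" by simp
  have s0: "0 < arctan m + arctan u" using assms by (simp add: add_pos_pos)
  have cs: "cos (arctan m + arctan u) \<noteq> 0" using s0 s1 cos_gt_zero_pi[of "arctan m + arctan u"] by auto
  have "tan (arctan m + arctan u) = (m + u)/(1 - m * u)"
    using tan_add[OF cos_arctan_not_zero cos_arctan_not_zero cs] by (simp add: tan_arctan)
  then have e1: "arctan ((m + u)/(1 - m * u)) = arctan m + arctan u"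
    using arctan_tan[of "arctan m + arctan u"] s0 s1 by simp
  have nz: "(m + u)/(1 - m * u) > 0" using assms by simp
  have "arctan ((1 - m * u)/(m + u)) = arctan (1/((m + u)/(1 - m * u)))" by simp
  also have "\<dots> = sgn ((m + u)/(1 - m * u)) * pi/2 - arctan ((m + u)/(1 - m * u))" using nz by (intro Transcendental.arctan_inverse) auto
  also have "\<dots> = pi/2 - arctan ((m + u)/(1 - m * u))" using nz by (simp only: sgn_pos)
  finally have "arctan ((1 - m * u)/(m + u)) = pi/2 - arctan m - arctan u" using e1 by simp
  moreover have "arctan t < arctan ((1 - m * u)/(m + u))" using tl by (simp add: arctan_less_iff)
  ultimately show ?thesis by simp
qed
definition chA :: "real \<Rightarrow> real \<Rightarrow> real \<Rightarrow> real" where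
  "chA x y z = (cos x + cos y * cos z)/(sin y * sin z)"
definition Kc :: "real \<Rightarrow> real \<Rightarrow> real \<Rightarrow> real" where
  "Kc x y z = (cos x)^2 + (cos y)^2 + (cos z)^2 + 2 * cos x * cos y * cos z - 1"

lemma Kc_rot: "Kc y z x = Kc x y z" unfolding Kc_def by (simp add: algebra_simps)

lemma chA_gt1:
  assumes "0 < x" "0 < y" "0 < z" "x + y + z < pi"
  shows "chA x y z > 1"
proof -
  have sy: "sin y > 0" and sz: "sin z > 0" using assms by (auto intro!: sin_gt_zero)
  have "cos (pi - (y + z)) < cos x"
    using assms by (subst cos_mono_less_eq) auto
  then have "- (cos y * cos z - sin y * sin z) < cos x" by (simp add: cos_add)
  then have "sin y * sin z < cos x + cos y * cos z" by simp
  then show ?thesis unfolding chA_def using sy sz by (simp add: field_simps)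
qed

lemma sinh_arcosh_real:
  assumes "v \<ge> (1::real)"
  shows "sinh (arcosh v) = sqrt (v^2 - 1)"
proof -
  have c: "cosh (arcosh v) = v" using assms by simp
  have "sinh (arcosh v) ^ 2 = v^2 - 1" using sinh_square_eq[of "arcosh v"] c by simp
  moreover have "sinh (arcosh v) \<ge> 0" using assms by simp
  ultimately show ?thesis by (metis real_sqrt_unique)
qed

lemma chA_sq:
  assumes "sin y \<noteq> 0" "sin z \<noteq> 0"
  shows "(chA x y z)^2 - 1 = Kc x y z/(sin y * sin z)^2"
proof -
  have "(chA x y z)^2 - 1 = ((cos x + cos y * cos z)^2 - (sin y)^2 * (sin z)^2)/(sin y * sin z)^2"
    unfolding chA_def using assms by (simp add: field_simps)
  also have "(sin y)^2 * (sin z)^2 = (1 - (cos y)^2) * (1 - (cos z)^2)" by (simp add: sin_squared_eq)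
  also have "(cos x + cos y * cos z)^2 - (1 - (cos y)^2) * (1 - (cos z)^2) = Kc x y z"
    unfolding Kc_def by algebra
  finally show ?thesis .
qed

lemma law_alg:
  fixes cx cy cz sx sy sz sq :: real
  assumes "sx \<noteq> 0" "sy \<noteq> 0" "sz \<noteq> 0" "sx^2 = 1 - cx^2"
    "sq * sq = cx^2 + cy^2 + cz^2 + 2 * cx * cy * cz - 1"
  shows "(cy + cz * cx)/(sz * sx) * ((cz + cx * cy)/(sx * sy)) - (cx + cy * cz)/(sy * sz)
     = cx * ((sq/(sz * sx)) * (sq/(sx * sy)))"
proof -
  have "(cy + cz * cx)/(sz * sx) * ((cz + cx * cy)/(sx * sy)) - (cx + cy * cz)/(sy * sz)
     = ((cy + cz * cx) * (cz + cx * cy) - (cx + cy * cz) * sx^2)/(sx^2 * sy * sz)"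
    using assms by (simp add: field_simps power2_eq_square)
  also have "\<dots> = ((cy + cz * cx) * (cz + cx * cy) - (cx + cy * cz) * (1 - cx^2))/(sx^2 * sy * sz)"
    using assms by simp
  also have "(cy + cz * cx) * (cz + cx * cy) - (cx + cy * cz) * (1 - cx^2) = cx * (sq * sq)"
    unfolding assms(5) by algebra
  also have "cx * (sq * sq)/(sx^2 * sy * sz) = cx * ((sq/(sz * sx)) * (sq/(sx * sy)))"
    using assms by (simp add: field_simps power2_eq_square)
  finally show ?thesis .
qed

lemma side_from:
  assumes "0 < x" "0 < y" "0 < z" "x + y + z < pi"
  shows "cosh (arcosh (chA x y z)) = chA x y z"
    "sinh (arcosh (chA x y z)) = sqrt (Kc x y z)/(sin y * sin z)"
    "arcosh (chA x y z) > 0" "Kc x y z > 0"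
proof -
  have g: "chA x y z > 1" using chA_gt1[OF assms] .
  have sy: "sin y > 0" and sz: "sin z > 0" using assms by (auto intro!: sin_gt_zero)
  show "cosh (arcosh (chA x y z)) = chA x y z" using g by simp
  have e: "(chA x y z)^2 - 1 = Kc x y z/(sin y * sin z)^2" using chA_sq sy sz by simp
  have "(chA x y z)^2 > 1^2" using g by (intro power_strict_mono) auto
  then have "Kc x y z/(sin y * sin z)^2 > 0" using e by simp
  then show K: "Kc x y z > 0" using sy sz by (simp add: zero_less_divide_iff)
  show "sinh (arcosh (chA x y z)) = sqrt (Kc x y z)/(sin y * sin z)"
    using sinh_arcosh_real[of "chA x y z"] g e sy sz by (simp add: real_sqrt_divide)
  have "arcosh (chA x y z) \<ge> 0" "arcosh (chA x y z) \<noteq> 0" using g by auto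
  then show "arcosh (chA x y z) > 0" by simp
qed

lemma law_from:
  assumes "0 < x" "0 < y" "0 < z" "x + y + z < pi"
  shows "chA y z x * chA z x y - chA x y z
     = cos x * ((sqrt (Kc x y z)/(sin z * sin x)) * (sqrt (Kc x y z)/(sin x * sin y)))"
proof -
  have s: "sin x > 0" "sin y > 0" "sin z > 0" using assms by (auto intro!: sin_gt_zero)
  have K: "Kc x y z > 0" using side_from(4)[OF assms] .
  show ?thesis unfolding chA_def
    by (rule law_alg) (use s K in \<open>auto simp: sin_squared_eq Kc_def\<close>)
qed

lemma angle_from_law:
  assumes "a > 0" "b > 0" "c > 0" "0 < x" "x < pi"
    "cosh b * cosh c - cosh a = cos x * (sinh b * sinh c)"
  shows "hangle a b c = x" "a < b + c"
proof -
  have p: "sinh b * sinh c > 0" using assms by simp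
  have "(cosh b * cosh c - cosh a)/(sinh b * sinh c) = cos x" unfolding assms(6) using p assms(2,3) by simp
  then show "hangle a b c = x" unfolding hangle_def using assms by (simp add: arccos_cos)
  have "cos pi < cos x" using assms by (subst cos_mono_less_eq) auto
  then have cx: "-1 < cos x" by simp
  have "cosh a = cosh b * cosh c - cos x * (sinh b * sinh c)" using assms(6) by simp
  also have "\<dots> < cosh b * cosh c + sinh b * sinh c"
  proof -
    have "- cos x * (sinh b * sinh c) < 1 * (sinh b * sinh c)"
      using cx p by (intro mult_strict_right_mono) auto
    then show ?thesis by simp
  qed
  also have "\<dots> = cosh (b + c)" by (simp add: cosh_add)
  finally show "a < b + c" using assms by (simp add: cosh_real_nonneg_less_iff)
qed

lemma from_angles:
  assumes "0 < x" "0 < y" "0 < z" "x + y + z < pi"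
  defines "a \<equiv> arcosh (chA x y z)" and "b \<equiv> arcosh (chA y z x)" and "c \<equiv> arcosh (chA z x y)"
  shows "hyp_triangle a b c" "hangle a b c = x" "hangle b c a = y" "hangle c a b = z"
    "cosh a = chA x y z" "cosh b = chA y z x" "cosh c = chA z x y"
    "sinh a = sqrt (Kc x y z)/(sin y * sin z)" "sinh b = sqrt (Kc x y z)/(sin z * sin x)"
    "sinh c = sqrt (Kc x y z)/(sin x * sin y)"
proof -
  have A2: "0 < y" "0 < z" "0 < x" "y + z + x < pi" using assms by auto
  have A3: "0 < z" "0 < x" "0 < y" "z + x + y < pi" using assms by auto
  note s1 = side_from[OF assms(1-4)] and s2 = side_from[OF A2] and s3 = side_from[OF A3]
  have K2: "Kc y z x = Kc x y z" and K3: "Kc z x y = Kc x y z" using Kc_rot by metis+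
  show ca: "cosh a = chA x y z" and cb: "cosh b = chA y z x" and cc: "cosh c = chA z x y"
    unfolding a_def b_def c_def using s1 s2 s3 by auto
  show sa: "sinh a = sqrt (Kc x y z)/(sin y * sin z)" unfolding a_def using s1 by simp
  show sb: "sinh b = sqrt (Kc x y z)/(sin z * sin x)" unfolding b_def using s2 K2 by simp
  show sc: "sinh c = sqrt (Kc x y z)/(sin x * sin y)" unfolding c_def using s3 K3 by simp
  have a0: "a > 0" and b0: "b > 0" and c0: "c > 0" unfolding a_def b_def c_def using s1 s2 s3 by auto
  have L1: "cosh b * cosh c - cosh a = cos x * (sinh b * sinh c)"
    unfolding ca cb cc sb sc using law_from[OF assms(1-4)] .
  have L2: "cosh c * cosh a - cosh b = cos y * (sinh c * sinh a)"
    unfolding ca cb cc sa sc using law_from[OF A2] unfolding K2 .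
  have L3: "cosh a * cosh b - cosh c = cos z * (sinh a * sinh b)"
    unfolding ca cb cc sa sb using law_from[OF A3] unfolding K3 .
  have xp: "x < pi" "y < pi" "z < pi" using assms by auto
  note r1 = angle_from_law[OF a0 b0 c0 assms(1) xp(1) L1]
  note r2 = angle_from_law[OF b0 c0 a0 assms(2) xp(2) L2]
  note r3 = angle_from_law[OF c0 a0 b0 assms(3) xp(3) L3]
  show "hangle a b c = x" "hangle b c a = y" "hangle c a b = z" using r1 r2 r3 by auto
  show "hyp_triangle a b c" unfolding hyp_triangle_def using r1 r2 r3 a0 b0 c0 by auto
qed
lemma Q_poly:
  fixes t u m :: real
  shows "((1-t^2) * (1+u^2) * (1+m^2))^2 + ((1-u^2) * (1+t^2) * (1+m^2))^2 + ((Rz t u m)^2 - (Iz t u m)^2)^2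
     - 2 * (1-t^2) * (1-u^2) * (1+m^2) * ((Rz t u m)^2 - (Iz t u m)^2) - ((1+t^2) * (1+u^2) * (1+m^2))^2 = Qpoly m u t"
  unfolding Rz_def Iz_def Qpoly_def by algebra

lemma Q_trig:
  fixes t u m :: real
  shows "(Nz t u m)^2 * ((cpar t)^2 + (cpar u)^2 + (CGz t u m)^2 + 2 * cpar t * cpar u * CGz t u m - 1) = Qpoly m u t"
proof -
  have p: "1+x^2 \<noteq> 0" for x :: real by (rule one_plus_sq_nz)
  have N0: "Nz t u m \<noteq> 0" using Nz_pos[of t u m] by simp
  have gen: "N^2 * (a^2+b^2+c^2+2 * a * b * c-1) = (N * a)^2+(N * b)^2+(N * c)^2+2 * (N * a) * (N * b) * (N * c)/N - N^2"
    if "N \<noteq> 0" for N a b c :: real using that by (simp add: field_simps power2_eq_square)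
  have h1: "Nz t u m * cpar t = (1-t^2) * (1+u^2) * (1+m^2)"
    unfolding Nz_def cpar_def using p[of t] by (simp add: field_simps)
  have h2: "Nz t u m * cpar u = (1-u^2) * (1+t^2) * (1+m^2)"
    unfolding Nz_def cpar_def using p[of u] by (simp add: field_simps)
  have h3: "Nz t u m * CGz t u m = -((Rz t u m)^2 - (Iz t u m)^2)"
    unfolding CGz_def using N0 by (simp add: field_simps)
  have h4: "((1-t^2) * (1+u^2) * (1+m^2)) * ((1-u^2) * (1+t^2) * (1+m^2)) / Nz t u m = (1-t^2) * (1-u^2) * (1+m^2)"
    using N0 unfolding Nz_def by (simp add: field_simps)
  have "(Nz t u m)^2 * ((cpar t)^2 + (cpar u)^2 + (CGz t u m)^2 + 2 * cpar t * cpar u * CGz t u m - 1)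
    = ((1-t^2) * (1+u^2) * (1+m^2))^2 + ((1-u^2) * (1+t^2) * (1+m^2))^2 + (-((Rz t u m)^2 - (Iz t u m)^2))^2
     + 2 * (((1-t^2) * (1+u^2) * (1+m^2)) * ((1-u^2) * (1+t^2) * (1+m^2)) / Nz t u m) * (-((Rz t u m)^2 - (Iz t u m)^2)) - (Nz t u m)^2"
    unfolding gen[OF N0] h1 h2 h3 by (simp add: field_simps)
  also have "\<dots> = ((1-t^2) * (1+u^2) * (1+m^2))^2 + ((1-u^2) * (1+t^2) * (1+m^2))^2 + ((Rz t u m)^2 - (Iz t u m)^2)^2
     - 2 * (1-t^2) * (1-u^2) * (1+m^2) * ((Rz t u m)^2 - (Iz t u m)^2) - ((1+t^2) * (1+u^2) * (1+m^2))^2"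
    unfolding h4 by (simp add: Nz_def algebra_simps power2_commute)
  finally show ?thesis using Q_poly by simp
qed
lemma K_alg:
  fixes ca cb cc sb sc :: real
  assumes "sb^2 = 1 - cb^2" "sc^2 = 1 - cc^2"
  shows "(ca + cb * cc)^2 - sb^2 * sc^2 = ca^2 + cb^2 + cc^2 + 2 * ca * cb * cc - 1"
  unfolding assms by algebra

lemma rat_sinh:
  fixes a :: real
  assumes "exp a \<in> \<rat>" shows "sinh a \<in> \<rat>"
proof -
  have "sinh a = (exp a - inverse (exp a))/2" using sinh_field_def[of a] by (simp add: exp_minus)
  moreover have "(exp a - inverse (exp a))/2 \<in> \<rat>" using assms by simp
  ultimately show ?thesis by metis
qed

lemma tri_w_alt: "tri_w m u a b c = Nz (tri_t a b c) u m * sinh a * sin (hbeta a b c) * sin (hgamma a b c)"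
  unfolding tri_w_def Nz_def by (simp add: algebra_simps)

lemma tri_params:
  assumes H: "(a, b, c) \<in> heron_mu m u" and m: "m > 0" and u: "u > 0" and mu: "m * u < 1"
    and mq: "m \<in> \<rat>" and uq: "u \<in> \<rat>"
  defines "t \<equiv> tri_t a b c"
  shows "t \<in> \<rat>" "t > 0" "condA m u t"
    "cosh a = (cpar t + cpar u * CGz t u m)/(spar u * SGz t u m)"
    "cosh b = (cpar u + CGz t u m * cpar t)/(SGz t u m * spar t)"
    "cosh c = (CGz t u m + cpar t * cpar u)/(spar t * spar u)"
    "tri_w m u a b c \<in> \<rat>" "tri_w m u a b c > 0" "Qpoly m u t = (tri_w m u a b c)^2"
    "a > 0"
proof -
  have he: "heron a b c" and hA: "has_rat_param (harea a b c) m" and hB: "has_rat_param (hbeta a b c) u"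
    using H unfolding heron_mu_def by auto
  have T: "hyp_triangle a b c" using he unfolding heron_def by simp
  have T2: "hyp_triangle b c a" and T3: "hyp_triangle c a b" using tri_rot T by blast+
  note f1 = hangle_facts[OF T] and f2 = hangle_facts[OF T2] and f3 = hangle_facts[OF T3]
  define x where "x = halpha a b c"
  define y where "y = hbeta a b c"
  define z where "z = hgamma a b c"
  define A where "A = harea a b c"
  have xh: "x = hangle a b c" "y = hangle b c a" "z = hangle c a b"
    unfolding x_def y_def z_def halpha_def hbeta_def hgamma_def by auto
  have x0: "0 < x" "x < pi" using f1 xh by auto
  have tt: "t = tan (x/2)" unfolding t_def tri_t_def x_def ..
  have cx: "cos x = cpar t" and sx: "sin x = spar t" and t0: "t > 0"
    using half_param[OF x0] tt by auto
  show "t > 0" by (rule t0)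
  have rx: "cos x \<in> \<rat>" "sin x \<in> \<rat>" using he unfolding heron_def rat_angle_def x_def by auto
  show tq: "t \<in> \<rat>" using rx t_from_param[of t] cx sx by (metis Rats_1 Rats_add Rats_divide)
  have cy: "cos y = cpar u" and sy: "sin y = spar u" using hB unfolding has_rat_param_def y_def cpar_def spar_def by auto
  have cA: "cos A = cpar m" and sA: "sin A = spar m" using hA unfolding has_rat_param_def A_def cpar_def spar_def by auto
  have zA: "z = pi - x - y - A" unfolding A_def harea_def x_def y_def z_def by simp
  have cz: "cos z = CGz t u m" and sz: "sin z = SGz t u m" unfolding zA using trig3[OF cx sx cy sy cA sA] by auto
  have sz0: "sin z > 0" using f3 xh by simp
  show cA': "condA m u t" using condA_SG[OF m u t0 mu] sz sz0 by simp
  have sy0: "sin y > 0" and sx0: "sin x > 0" using f1 f2 xh by auto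
  have d1: "cos x + cos y * cos z = sin y * sin z * cosh a" using dual_law[OF T] xh by simp
  have d2: "cos y + cos z * cos x = sin z * sin x * cosh b" using dual_law[OF T2] xh by simp
  have d3: "cos z + cos x * cos y = sin x * sin y * cosh c" using dual_law[OF T3] xh by simp
  show "cosh a = (cpar t + cpar u * CGz t u m)/(spar u * SGz t u m)"
    using d1 sy0 sz0 unfolding cx cy cz sy sz by (simp add: field_simps)
  show "cosh b = (cpar u + CGz t u m * cpar t)/(SGz t u m * spar t)"
    using d2 sx0 sz0 unfolding cx cy cz sx sz by (simp add: field_simps)
  show "cosh c = (CGz t u m + cpar t * cpar u)/(spar t * spar u)"
    using d3 sx0 sy0 unfolding cx cy cz sx sy by (simp add: field_simps)
  have a0: "a > 0" using T unfolding hyp_triangle_def by simp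
  show "a > 0" by (rule a0)
  have ea: "exp a \<in> \<rat>" using he unfolding heron_def rat_length_def by simp
  have tw: "tri_w m u a b c = Nz t u m * sinh a * sin y * sin z"
    unfolding tri_w_alt t_def y_def z_def ..
  have ry: "sin y \<in> \<rat>" "sin z \<in> \<rat>" using he unfolding heron_def rat_angle_def y_def z_def by auto
  have rN: "Nz t u m \<in> \<rat>" using tq mq uq unfolding Nz_def by simp
  show "tri_w m u a b c \<in> \<rat>" unfolding tw using rN rat_sinh[OF ea] ry by simp
  show "tri_w m u a b c > 0" unfolding tw using Nz_pos a0 sy0 sz0 by simp
  have "(tri_w m u a b c)^2 = (Nz t u m)^2 * ((cosh a * (sin y * sin z))^2 - (sin y)^2 * (sin z)^2)"
    unfolding tw by (simp only: power_mult_distrib sinh_square_eq) algebra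
  also have "cosh a * (sin y * sin z) = cos x + cos y * cos z" using d1 by simp
  also have "(cos x + cos y * cos z)^2 - (sin y)^2 * (sin z)^2
      = (cos x)^2 + (cos y)^2 + (cos z)^2 + 2 * cos x * cos y * cos z - 1"
    by (rule K_alg) (simp_all add: sin_squared_eq)
  also have "(Nz t u m)^2 * \<dots> = Qpoly m u t" unfolding cx cy cz by (rule Q_trig)
  finally show "Qpoly m u t = (tri_w m u a b c)^2" by simp
qed
lemma CGz_rat: "t \<in> \<rat> \<Longrightarrow> u \<in> \<rat> \<Longrightarrow> m \<in> \<rat> \<Longrightarrow> CGz t u m \<in> \<rat>"
  unfolding CGz_def Rz_def Iz_def Nz_def by simp
lemma SGz_rat: "t \<in> \<rat> \<Longrightarrow> u \<in> \<rat> \<Longrightarrow> m \<in> \<rat> \<Longrightarrow> SGz t u m \<in> \<rat>"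
  unfolding SGz_def Rz_def Iz_def Nz_def by simp

lemma tri_surj:
  assumes m: "m > 0" and u: "u > 0" and mu: "m * u < 1" and mq: "m \<in> \<rat>" and uq: "u \<in> \<rat>"
    and tq: "t \<in> \<rat>" and cA: "condA m u t" and wq: "w \<in> \<rat>" and w0: "w > 0" and Q: "Qpoly m u t = w^2"
  shows "\<exists>a b c. (a, b, c) \<in> heron_mu m u \<and> tri_t a b c = t"
proof -
  have t0: "t > 0" using cA unfolding condA_def by simp
  define x where "x = 2 * arctan t"
  define y where "y = 2 * arctan u"
  define A where "A = 2 * arctan m"
  define z where "z = pi - x - y - A"
  have sl: "arctan t + arctan u + arctan m < pi/2" using sum_lt[OF m u mu cA] .
  have x0: "0 < x" and y0: "0 < y" and A0: "0 < A" unfolding x_def y_def A_def using t0 u m by auto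
  have z0: "0 < z" unfolding z_def x_def y_def A_def using sl by simp
  have s: "x + y + z < pi" unfolding z_def using A0 by simp
  define a where "a = arcosh (chA x y z)"
  define b where "b = arcosh (chA y z x)"
  define c where "c = arcosh (chA z x y)"
  note fa = from_angles[OF x0 y0 z0 s, folded a_def b_def c_def]
  have cx: "cos x = cpar t" and sx: "sin x = spar t" unfolding x_def by (rule arctan_param)+
  have cy: "cos y = cpar u" and sy: "sin y = spar u" unfolding y_def by (rule arctan_param)+
  have cAA: "cos A = cpar m" and sAA: "sin A = spar m" unfolding A_def by (rule arctan_param)+
  have cz: "cos z = CGz t u m" and sz: "sin z = SGz t u m" unfolding z_def using trig3[OF cx sx cy sy cAA sAA] by auto
  have N: "Nz t u m > 0" by (rule Nz_pos)
  have "(Nz t u m)^2 * Kc x y z = w^2" unfolding Kc_def cx cy cz using Q_trig Q by simp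
  then have "Kc x y z = (w / Nz t u m)^2" using N by (simp add: field_simps)
  then have sK: "sqrt (Kc x y z) = w / Nz t u m" using w0 N by simp
  have r: "cpar t \<in> \<rat>" "spar t \<in> \<rat>" "cpar u \<in> \<rat>" "spar u \<in> \<rat>" "cpar m \<in> \<rat>" "spar m \<in> \<rat>"
    "CGz t u m \<in> \<rat>" "SGz t u m \<in> \<rat>" "Nz t u m \<in> \<rat>"
    using tq uq mq by (auto intro: cpar_rat spar_rat CGz_rat SGz_rat simp: Nz_def)
  have ea: "exp a \<in> \<rat>" unfolding cosh_plus_sinh[symmetric] fa(5) fa(8) sK chA_def cx cy cz sy sz
    using r wq by simp
  have eb: "exp b \<in> \<rat>" unfolding cosh_plus_sinh[symmetric] fa(6) fa(9) sK chA_def cx cy cz sx sz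
    using r wq by simp
  have ec: "exp c \<in> \<rat>" unfolding cosh_plus_sinh[symmetric] fa(7) fa(10) sK chA_def cx cy cz sx sy
    using r wq by simp
  have ang: "halpha a b c = x" "hbeta a b c = y" "hgamma a b c = z"
    unfolding halpha_def hbeta_def hgamma_def using fa by auto
  have ar: "harea a b c = A" unfolding harea_def ang z_def by simp
  have "heron a b c" unfolding heron_def rat_length_def rat_angle_def ang ar
    using fa(1) ea eb ec r cx sx cy sy cz sz cAA sAA by simp
  moreover have "has_rat_param (harea a b c) m" unfolding has_rat_param_def ar cAA sAA cpar_def spar_def
    using mq m by simp
  moreover have "has_rat_param (hbeta a b c) u" unfolding has_rat_param_def ang cy sy cpar_def spar_def
    using uq u by simp
  ultimately have "(a, b, c) \<in> heron_mu m u" unfolding heron_mu_def by simp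
  moreover have "tri_t a b c = t" unfolding tri_t_def ang x_def by (simp add: tan_arctan)
  ultimately show ?thesis by blast
qed

lemma tri_inj:
  assumes m: "m > 0" and u: "u > 0" and mu: "m * u < 1" and mq: "m \<in> \<rat>" and uq: "u \<in> \<rat>"
  shows "inj_on (\<lambda>(a, b, c). tri_t a b c) (heron_mu m u)"
proof (rule inj_onI)
  fix X Y
  assume HX: "X \<in> heron_mu m u" and HY: "Y \<in> heron_mu m u"
    and eXY: "(\<lambda>(a, b, c). tri_t a b c) X = (\<lambda>(a, b, c). tri_t a b c) Y"
  obtain a b c where X: "X = (a, b, c)" by (cases X) auto
  obtain a' b' c' where Y: "Y = (a', b', c')" by (cases Y) auto
  have H: "(a, b, c) \<in> heron_mu m u" and H': "(a', b', c') \<in> heron_mu m u" using HX HY X Y by auto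
  have e: "tri_t a b c = tri_t a' b' c'" using eXY X Y by simp
  note p = tri_params[OF H m u mu mq uq] and p' = tri_params[OF H' m u mu mq uq]
  have T: "hyp_triangle a b c" "hyp_triangle a' b' c'" using H H' unfolding heron_mu_def heron_def by auto
  have pos: "a > 0" "b > 0" "c > 0" "a' > 0" "b' > 0" "c' > 0" using T unfolding hyp_triangle_def by auto
  have "cosh a = cosh a'" "cosh b = cosh b'" "cosh c = cosh c'" using p(4-6) p'(4-6) e by simp_all
  then show "X = Y" using pos X Y by simp
qed
definition c3f :: "'a::field_char_0 \<Rightarrow> 'a \<Rightarrow> 'a" where
  "c3f m u = (- 32 * m^8 * u^5 + 32 * m^8 * u^3 - 32 * m^7 * u^6 + 128 * m^7 * u^4 - 32 * m^7 * u^2 + 32 * m^6 * u^5 - 32 * m^6 * u^3 - 64 * m^5 * u^6 + 192 * m^5 * u^4 - 64 * m^5 * u^2 + 160 * m^4 * u^5 - 160 * m^4 * u^3 - 32 * m^3 * u^6 - 32 * m^3 * u^2 + 96 * m^2 * u^5 - 96 * m^2 * u^3 - 64 * m * u^4)"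
definition c4f :: "'a::field_char_0 \<Rightarrow> 'a \<Rightarrow> 'a" where
  "c4f m u = 16*(m^2+1)^2 * u^2*(m^2 * kval m u^2 + u^2*(m^2+1)^2)"

lemma fin_id:
  fixes m u t :: "'a::field_char_0"
  shows "(4 * t^2 * X0 m u - kval m u * Ppoly m u t)^2 - m^2 * kval m u^2 * Qpoly m u t
     = t^3*(c3f m u + c4f m u * t)"
  unfolding c3f_def c4f_def kval_def X0_def Ppoly_def Qpoly_def by algebra
lemma fin_sq: "finite {w::'a::idom. w^2 = c}"
proof (cases "\<exists>v. v^2 = c")
  case True
  then obtain v where v: "v^2 = c" by blast
  have "{w. w^2 = c} \<subseteq> {v, -v}"
  proof
    fix w assume "w \<in> {w. w^2 = c}"
    then have "(w - v) * (w + v) = 0" using v by (simp add: algebra_simps power2_eq_square)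
    then show "w \<in> {v, -v}" by (auto simp: add_eq_0_iff)
  qed
  then show ?thesis by (rule finite_subset) simp
next
  case False
  then have "{w. w^2 = c} = {}" by auto
  then show ?thesis by simp
qed

lemma fin_quad: "finite {x::'a::idom. x^2 + p * x + q = 0}"
proof (cases "\<exists>v. v^2 + p * v + q = 0")
  case True
  then obtain v where v: "v^2 + p * v + q = 0" by blast
  have "{x. x^2 + p * x + q = 0} \<subseteq> {v, -v-p}"
  proof
    fix x assume "x \<in> {x. x^2 + p * x + q = 0}"
    then have x: "x^2 + p * x + q = 0" by simp
    have "(x - v) * (x + v + p) = (x^2 + p * x + q) - (v^2 + p * v + q)" by algebra
    then have "(x - v) * (x + v + p) = 0" using x v by simp
    then have "x - v = 0 \<or> x + v + p = 0" by simp
    moreover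
    { assume h: "x + v + p = 0"
      have "x = (x + v + p) - v - p" by (simp add: algebra_simps)
      also have "\<dots> = -v-p" using h by simp
      finally have "x = -v-p" . }
    ultimately show "x \<in> {v, -v-p}" by auto
  qed
  then show ?thesis by (rule finite_subset) simp
next
  case False
  then have "{x. x^2 + p * x + q = 0} = {}" by auto
  then show ?thesis by simp
qed

lemma x0_t:
  fixes m u t w :: "'a::field_char_0"
  assumes m: "m \<noteq> 0" and k: "kval m u \<noteq> 0" and c4: "c4f m u \<noteq> 0"
    and C: "onC m u t w" and t: "t \<noteq> 0" and px: "phi_x m u t w = X0 m u"
  shows "t = - c3f m u / c4f m u" "w = (4 * t^2 * X0 m u / kval m u - Ppoly m u t) / m"
proof -
  have e: "kval m u * (Ppoly m u t + m * w) = 4 * t^2 * X0 m u"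
    using px t unfolding phi_x_def by (simp add: field_simps)
  then show w: "w = (4 * t^2 * X0 m u / kval m u - Ppoly m u t) / m"
    using m k by (simp add: field_simps)
  have "4 * t^2 * X0 m u - kval m u * Ppoly m u t = kval m u * m * w" using e by (simp add: algebra_simps)
  then have "t^3 * (c3f m u + c4f m u * t) = (kval m u * m * w)^2 - m^2 * kval m u^2 * Qpoly m u t"
    using fin_id[of t m u] by simp
  also have "\<dots> = 0" using C unfolding onC_def by (simp add: power_mult_distrib)
  finally have "c3f m u + c4f m u * t = 0" using t by simp
  then show "t = - c3f m u / c4f m u" using c4 by (simp add: field_simps) (metis add.commute add_eq_0_iff mult.commute)
qed

lemma fin_S1:
  fixes m u :: "'a::field_char_0"
  assumes m: "m \<noteq> 0" and k: "kval m u \<noteq> 0" and c4: "c4f m u \<noteq> 0"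
  shows "finite {(t, w). onC m u t w \<and> (t = 0 \<or> phi_x m u t w = X0 m u)}"
proof -
  define t0 where "t0 = - c3f m u / c4f m u"
  define w0 where "w0 = (4 * t0^2 * X0 m u / kval m u - Ppoly m u t0) / m"
  have "{(t, w). onC m u t w \<and> (t = 0 \<or> phi_x m u t w = X0 m u)}
     \<subseteq> (\<lambda>w. (0, w)) ` {w. w^2 = Qpoly m u 0} \<union> {(t0, w0)}"
  proof (intro subsetI)
    fix p assume "p \<in> {(t, w). onC m u t w \<and> (t = 0 \<or> phi_x m u t w = X0 m u)}"
    then obtain t w where pe: "p = (t, w)" and C: "onC m u t w" and d: "t = 0 \<or> phi_x m u t w = X0 m u" by auto
    have R: "(t, w) \<in> (\<lambda>w. (0, w)) ` {w. w^2 = Qpoly m u 0} \<union> {(t0, w0)}"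
    proof (cases "t = 0")
      case True then show ?thesis using C unfolding onC_def by auto
    next
      case False
      then have px: "phi_x m u t w = X0 m u" using d by simp
      have "t = t0" unfolding t0_def by (rule x0_t(1)[OF m k c4 C False px])
      moreover have "w = w0" using x0_t(2)[OF m k c4 C False px] \<open>t = t0\<close> unfolding w0_def by simp
      ultimately show ?thesis by simp
    qed
    with pe show "p \<in> (\<lambda>w. (0, w)) ` {w. w^2 = Qpoly m u 0} \<union> {(t0, w0)}" by simp
  qed
  moreover have "finite ((\<lambda>w. (0, w)) ` {w. w^2 = Qpoly m u 0} \<union> {(t0, w0)})"
    using finite_imageI[OF fin_sq, of "\<lambda>w. (0, w)"] by simp
  ultimately show ?thesis by (rule finite_subset)
qed

lemma fin_S2:
  fixes m u :: "'a::field_char_0"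
  assumes m: "m \<noteq> 0" and k: "kval m u \<noteq> 0"
  shows "finite {(x, y). onE m u x y \<and> (line_val m u x y = 0 \<or> psi_t m u x y = 0)}"
proof -
  define n where "n = nval m u"
  define L where "L = Lval m u"
  define S where "S = {n} \<union> {x. x^2 + (- (n * (u^2+1)) - L^2) * x + L^2 * n = 0}"
  have "{(x, y). onE m u x y \<and> (line_val m u x y = 0 \<or> psi_t m u x y = 0)}
     \<subseteq> (\<lambda>x. (x, - L * (x - n))) ` S \<union> (\<lambda>y. (X0 m u, y)) ` {y. y^2 = X0 m u * (X0 m u - n) * (X0 m u - n * (u^2+1))}"
  proof (intro subsetI)
    fix p assume "p \<in> {(x, y). onE m u x y \<and> (line_val m u x y = 0 \<or> psi_t m u x y = 0)}"
    then obtain x y where pe: "p = (x, y)" and E: "onE m u x y" and d: "line_val m u x y = 0 \<or> psi_t m u x y = 0" by auto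
    have d': "line_val m u x y = 0 \<or> x = X0 m u"
      using d m k unfolding psi_t_def by auto
    have R: "(x, y) \<in> (\<lambda>x. (x, - L * (x - n))) ` S \<union> (\<lambda>y. (X0 m u, y)) ` {y. y^2 = X0 m u * (X0 m u - n) * (X0 m u - n * (u^2+1))}"
    proof (cases "line_val m u x y = 0")
      case True
      then have y: "y = - L * (x - n)" unfolding line_val_def L_def n_def by (simp add: algebra_simps)
      have "(L * (x - n))^2 = x * (x - n) * (x - n * (u^2+1))" using E y unfolding onE_def n_def by simp
      then have "(x - n) * (x^2 + (- (n * (u^2+1)) - L^2) * x + L^2 * n) = 0"
        by (simp add: algebra_simps power2_eq_square)
      then have "x \<in> S" unfolding S_def by auto
      then show ?thesis using y by auto
    next
      case False
      then have "x = X0 m u" using d' by simp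
      then show ?thesis using E unfolding onE_def n_def by auto
    qed
    with pe show "p \<in> (\<lambda>x. (x, - L * (x - n))) ` S \<union> (\<lambda>y. (X0 m u, y)) ` {y. y^2 = X0 m u * (X0 m u - n) * (X0 m u - n * (u^2+1))}" by simp
  qed
  moreover have "finite S" unfolding S_def using fin_quad by simp
  then have "finite ((\<lambda>x. (x, - L * (x - n))) ` S \<union> (\<lambda>y. (X0 m u, y)) ` {y. y^2 = X0 m u * (X0 m u - n) * (X0 m u - n * (u^2+1))})"
    using finite_imageI[OF fin_sq, of "\<lambda>y. (X0 m u, y)"] by simp
  ultimately show ?thesis by (rule finite_subset)
qed
lemma kpos:
  assumes "m > 0" "u > 0" "m * u < (1::real)"
  shows "kval m u > 0"
proof -
  have "m * u * u < 1 * u" using assms by (intro mult_strict_right_mono) auto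
  then have "m * u^2 < u" by (simp add: power2_eq_square mult.assoc)
  then show ?thesis unfolding kval_def using assms by (simp add: algebra_simps)
qed

lemma c4pos:
  assumes "u > (0::real)"
  shows "c4f m u > 0"
proof -
  have h: "m^2 + 1 > 0" using one_plus_sq_pos[of m] by (simp add: add.commute)
  have "m^2 * kval m u^2 + u^2 * (m^2+1)^2 > 0"
    using assms h by (intro add_nonneg_pos) (auto intro!: mult_pos_pos simp: add.commute)
  then show ?thesis unfolding c4f_def using assms h by (intro mult_pos_pos) auto
qed

lemma of_real_kval: "kval (of_real m) (of_real u) = (of_real (kval m u) :: complex)"
  unfolding kval_def by simp
lemma of_real_c4f: "c4f (of_real m) (of_real u) = (of_real (c4f m u) :: complex)"
  unfolding c4f_def kval_def by simp

lemma Ppt_eq: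
  fixes m u t :: real
  shows "(X0 m u, - m * kval m u * (X0 m u - X0 m u)/t - Lval m u * (X0 m u - nval m u)) = Ppt m u"
  unfolding Ppt_def X0_def Lval_def nval_def kval_def by (simp add: algebra_simps) algebra

lemma rat_maps:
  assumes "m \<in> \<rat>" "u \<in> \<rat>" "x \<in> \<rat>" "y \<in> \<rat>" "t \<in> \<rat>" "w \<in> \<rat>"
  shows "psi_t m u x y \<in> \<rat>" "psi_w m u x y \<in> \<rat>" "phi_x m u t w \<in> \<rat>" "phi_y m u t w \<in> \<rat>"
proof -
  have k: "kval m u \<in> \<rat>" "X0 m u \<in> \<rat>" "Lval m u \<in> \<rat>" "nval m u \<in> \<rat>" "line_val m u x y \<in> \<rat>"
    using assms unfolding kval_def X0_def Lval_def nval_def line_val_def by simp_all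
  have P: "\<And>s. s \<in> \<rat> \<Longrightarrow> Ppoly m u s \<in> \<rat>" using assms k unfolding Ppoly_def by simp
  show pt: "psi_t m u x y \<in> \<rat>" unfolding psi_t_def using k assms by simp
  show "psi_w m u x y \<in> \<rat>" unfolding psi_w_def using k assms pt P by simp
  show px: "phi_x m u t w \<in> \<rat>" unfolding phi_x_def using k assms P by simp
  show "phi_y m u t w \<in> \<rat>" unfolding phi_y_def using k assms px by simp
qed
theorem theorem1:
  fixes m u :: real
  assumes "m \<in> \<rat>" "u \<in> \<rat>" "m > 0" "u > 0" "m * u < 1"
  shows
  \<comment> \<open>(i) bijection triangles to admissible t, with the explicit w\<close>
  "bij_betw (\<lambda>(a,b,c). tri_t a b c) (heron_mu m u)
      {t. t \<in> \<rat> \<and> condA m u t \<and> (\<exists>w\<in>\<rat>. w > 0 \<and> Qpoly m u t = w^2)}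
   \<and> (\<forall>(a,b,c)\<in>heron_mu m u. tri_w m u a b c \<in> \<rat> \<and> tri_w m u a b c > 0 \<and>
        Qpoly m u (tri_t a b c) = (tri_w m u a b c)^2)
   \<and> \<comment> \<open>(ii) birationality, checked over the algebraic closure C\<close>
   (let cm = complex_of_real m; cu = complex_of_real u in
     (\<forall>t w. onC cm cu t w \<and> t \<noteq> 0 \<and> phi_x cm cu t w \<noteq> X0 cm cu \<longrightarrow>
        onE cm cu (phi_x cm cu t w) (phi_y cm cu t w) \<and>
        line_val cm cu (phi_x cm cu t w) (phi_y cm cu t w) \<noteq> 0 \<and>
        psi_t cm cu (phi_x cm cu t w) (phi_y cm cu t w) = t \<and>
        psi_w cm cu (phi_x cm cu t w) (phi_y cm cu t w) = w)
   \<and> (\<forall>x y. onE cm cu x y \<and> line_val cm cu x y \<noteq> 0 \<and> psi_t cm cu x y \<noteq> 0 \<longrightarrow>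
        onC cm cu (psi_t cm cu x y) (psi_w cm cu x y) \<and>
        phi_x cm cu (psi_t cm cu x y) (psi_w cm cu x y) \<noteq> X0 cm cu \<and>
        phi_x cm cu (psi_t cm cu x y) (psi_w cm cu x y) = x \<and>
        phi_y cm cu (psi_t cm cu x y) (psi_w cm cu x y) = y)
   \<and> finite {(t, w). onC cm cu t w \<and> (t = 0 \<or> phi_x cm cu t w = X0 cm cu)}
   \<and> finite {(x, y). onE cm cu x y \<and> (line_val cm cu x y = 0 \<or> psi_t cm cu x y = 0)})
   \<and> \<comment> \<open>consequence: correspondence of triangles with rational points of E\<close>
   (let F = (\<lambda>(a,b,c). (phi_x m u (tri_t a b c) (tri_w m u a b c),
                        phi_y m u (tri_t a b c) (tri_w m u a b c)));
        G = {(x, y). x \<in> \<rat> \<and> y \<in> \<rat> \<and> onE m u x y \<and> line_val m u x y \<noteq> 0 \<and>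
                     condA m u (psi_t m u x y) \<and> psi_w m u x y > 0}
    in inj_on F (heron_mu m u) \<and> G \<subseteq> F ` heron_mu m u \<and> F ` heron_mu m u \<subseteq> G \<union> {Ppt m u})"

proof -
  have mq: "m \<in> \<rat>" and uq: "u \<in> \<rat>" and m0: "m > 0" and u0: "u > 0" and mu: "m * u < 1"
    using assms by auto
  have k: "kval m u > 0" using kpos[OF m0 u0 mu] .
  have c4: "c4f m u > 0" using c4pos[OF u0] .
  define TS where "TS = {t. t \<in> \<rat> \<and> condA m u t \<and> (\<exists>w\<in>\<rat>. w > 0 \<and> Qpoly m u t = w^2)}"
  have P1: "bij_betw (\<lambda>(a,b,c). tri_t a b c) (heron_mu m u) TS"
    unfolding bij_betw_def
  proof
    show "inj_on (\<lambda>(a,b,c). tri_t a b c) (heron_mu m u)" using tri_inj[OF m0 u0 mu mq uq] .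
    show "(\<lambda>(a,b,c). tri_t a b c) ` heron_mu m u = TS"
    proof
      show "(\<lambda>(a,b,c). tri_t a b c) ` heron_mu m u \<subseteq> TS"
      proof
        fix t assume "t \<in> (\<lambda>(a,b,c). tri_t a b c) ` heron_mu m u"
        then obtain a b c where H: "(a, b, c) \<in> heron_mu m u" and t: "t = tri_t a b c" by auto
        note p = tri_params[OF H m0 u0 mu mq uq]
        show "t \<in> TS" unfolding TS_def t using p by auto
      qed
      show "TS \<subseteq> (\<lambda>(a,b,c). tri_t a b c) ` heron_mu m u"
      proof
        fix t assume "t \<in> TS"
        then obtain w where tq: "t \<in> \<rat>" and cA: "condA m u t" and wq: "w \<in> \<rat>" and w0: "w > 0"
          and Q: "Qpoly m u t = w^2" unfolding TS_def by auto
        obtain a b c where "(a, b, c) \<in> heron_mu m u" "tri_t a b c = t"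
          using tri_surj[OF m0 u0 mu mq uq tq cA wq w0 Q] by blast
        then show "t \<in> (\<lambda>(a,b,c). tri_t a b c) ` heron_mu m u" by force
      qed
    qed
  qed
  have P2: "\<forall>(a,b,c)\<in>heron_mu m u. tri_w m u a b c \<in> \<rat> \<and> tri_w m u a b c > 0 \<and>
        Qpoly m u (tri_t a b c) = (tri_w m u a b c)^2"
    using tri_params[OF _ m0 u0 mu mq uq] by auto
  have P3: "(let cm = complex_of_real m; cu = complex_of_real u in
     (\<forall>t w. onC cm cu t w \<and> t \<noteq> 0 \<and> phi_x cm cu t w \<noteq> X0 cm cu \<longrightarrow>
        onE cm cu (phi_x cm cu t w) (phi_y cm cu t w) \<and>
        line_val cm cu (phi_x cm cu t w) (phi_y cm cu t w) \<noteq> 0 \<and>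
        psi_t cm cu (phi_x cm cu t w) (phi_y cm cu t w) = t \<and>
        psi_w cm cu (phi_x cm cu t w) (phi_y cm cu t w) = w)
   \<and> (\<forall>x y. onE cm cu x y \<and> line_val cm cu x y \<noteq> 0 \<and> psi_t cm cu x y \<noteq> 0 \<longrightarrow>
        onC cm cu (psi_t cm cu x y) (psi_w cm cu x y) \<and>
        phi_x cm cu (psi_t cm cu x y) (psi_w cm cu x y) \<noteq> X0 cm cu \<and>
        phi_x cm cu (psi_t cm cu x y) (psi_w cm cu x y) = x \<and>
        phi_y cm cu (psi_t cm cu x y) (psi_w cm cu x y) = y)
   \<and> finite {(t, w). onC cm cu t w \<and> (t = 0 \<or> phi_x cm cu t w = X0 cm cu)}
   \<and> finite {(x, y). onE cm cu x y \<and> (line_val cm cu x y = 0 \<or> psi_t cm cu x y = 0)})"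
  proof -
    define cm where "cm = complex_of_real m"
    define cu where "cu = complex_of_real u"
    have cm0: "cm \<noteq> 0" unfolding cm_def using m0 by simp
    have kc: "kval cm cu \<noteq> 0" unfolding cm_def cu_def of_real_kval using k by simp
    have c4c: "c4f cm cu \<noteq> 0" unfolding cm_def cu_def of_real_c4f using c4 by simp
    have A1: "\<forall>t w. onC cm cu t w \<and> t \<noteq> 0 \<and> phi_x cm cu t w \<noteq> X0 cm cu \<longrightarrow>
        onE cm cu (phi_x cm cu t w) (phi_y cm cu t w) \<and>
        line_val cm cu (phi_x cm cu t w) (phi_y cm cu t w) \<noteq> 0 \<and>
        psi_t cm cu (phi_x cm cu t w) (phi_y cm cu t w) = t \<and>
        psi_w cm cu (phi_x cm cu t w) (phi_y cm cu t w) = w"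
    proof (intro allI impI)
      fix t w assume h: "onC cm cu t w \<and> t \<noteq> 0 \<and> phi_x cm cu t w \<noteq> X0 cm cu"
      then have C: "onC cm cu t w" and t0: "t \<noteq> 0" and px: "phi_x cm cu t w \<noteq> X0 cm cu" by auto
      show "onE cm cu (phi_x cm cu t w) (phi_y cm cu t w) \<and>
        line_val cm cu (phi_x cm cu t w) (phi_y cm cu t w) \<noteq> 0 \<and>
        psi_t cm cu (phi_x cm cu t w) (phi_y cm cu t w) = t \<and>
        psi_w cm cu (phi_x cm cu t w) (phi_y cm cu t w) = w"
        using fwd[OF C t0] fwd2(2-4)[OF t0 cm0 kc px] by simp
    qed
    have A2: "\<forall>x y. onE cm cu x y \<and> line_val cm cu x y \<noteq> 0 \<and> psi_t cm cu x y \<noteq> 0 \<longrightarrow>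
        onC cm cu (psi_t cm cu x y) (psi_w cm cu x y) \<and>
        phi_x cm cu (psi_t cm cu x y) (psi_w cm cu x y) \<noteq> X0 cm cu \<and>
        phi_x cm cu (psi_t cm cu x y) (psi_w cm cu x y) = x \<and>
        phi_y cm cu (psi_t cm cu x y) (psi_w cm cu x y) = y"
    proof (intro allI impI)
      fix x y assume h: "onE cm cu x y \<and> line_val cm cu x y \<noteq> 0 \<and> psi_t cm cu x y \<noteq> 0"
      then have E: "onE cm cu x y" and lv: "line_val cm cu x y \<noteq> 0" and pt: "psi_t cm cu x y \<noteq> 0" by auto
      show "onC cm cu (psi_t cm cu x y) (psi_w cm cu x y) \<and>
        phi_x cm cu (psi_t cm cu x y) (psi_w cm cu x y) \<noteq> X0 cm cu \<and>
        phi_x cm cu (psi_t cm cu x y) (psi_w cm cu x y) = x \<and>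
        phi_y cm cu (psi_t cm cu x y) (psi_w cm cu x y) = y"
        using bwd[OF E lv pt cm0 kc] by simp
    qed
    have A3: "finite {(t, w). onC cm cu t w \<and> (t = 0 \<or> phi_x cm cu t w = X0 cm cu)}"
      using fin_S1[OF cm0 kc c4c] .
    have A4: "finite {(x, y). onE cm cu x y \<and> (line_val cm cu x y = 0 \<or> psi_t cm cu x y = 0)}"
      using fin_S2[OF cm0 kc] .
    show ?thesis unfolding Let_def cm_def[symmetric] cu_def[symmetric] by (intro conjI A1 A2 A3 A4)
  qed
  have P4: "(let F = (\<lambda>(a,b,c). (phi_x m u (tri_t a b c) (tri_w m u a b c),
                        phi_y m u (tri_t a b c) (tri_w m u a b c)));
        G = {(x, y). x \<in> \<rat> \<and> y \<in> \<rat> \<and> onE m u x y \<and> line_val m u x y \<noteq> 0 \<and>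
                     condA m u (psi_t m u x y) \<and> psi_w m u x y > 0}
    in inj_on F (heron_mu m u) \<and> G \<subseteq> F ` heron_mu m u \<and> F ` heron_mu m u \<subseteq> G \<union> {Ppt m u})"
  proof -
    define F where "F = (\<lambda>(a,b,c). (phi_x m u (tri_t a b c) (tri_w m u a b c),
                        phi_y m u (tri_t a b c) (tri_w m u a b c)))"
    define G where "G = {(x, y). x \<in> \<rat> \<and> y \<in> \<rat> \<and> onE m u x y \<and> line_val m u x y \<noteq> 0 \<and>
                     condA m u (psi_t m u x y) \<and> psi_w m u x y > 0}"
    have m00: "m \<noteq> 0" and k0: "kval m u \<noteq> 0" and c40: "c4f m u \<noteq> 0" using m0 k c4 by auto
    have B1: "inj_on F (heron_mu m u)"
    proof (rule inj_onI)
      fix X Y assume HX: "X \<in> heron_mu m u" and HY: "Y \<in> heron_mu m u" and e: "F X = F Y"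
      obtain a b c where X: "X = (a, b, c)" by (cases X) auto
      obtain a' b' c' where Y: "Y = (a', b', c')" by (cases Y) auto
      have H: "(a, b, c) \<in> heron_mu m u" and H': "(a', b', c') \<in> heron_mu m u" using HX HY X Y by auto
      define t1 where "t1 = tri_t a b c"
      define w1 where "w1 = tri_w m u a b c"
      define t2 where "t2 = tri_t a' b' c'"
      define w2 where "w2 = tri_w m u a' b' c'"
      note p = tri_params[OF H m0 u0 mu mq uq, folded t1_def w1_def]
      note p' = tri_params[OF H' m0 u0 mu mq uq, folded t2_def w2_def]
      have C1: "onC m u t1 w1" and C2: "onC m u t2 w2" unfolding onC_def using p p' by auto
      have t10: "t1 \<noteq> 0" and t20: "t2 \<noteq> 0" using p p' by auto
      have ex: "phi_x m u t1 w1 = phi_x m u t2 w2" and ey: "phi_y m u t1 w1 = phi_y m u t2 w2"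
        using e unfolding F_def X Y t1_def w1_def t2_def w2_def by auto
      have "t1 = t2"
      proof (cases "phi_x m u t1 w1 = X0 m u")
        case True
        then have "phi_x m u t2 w2 = X0 m u" using ex by simp
        then show ?thesis using x0_t(1)[OF m00 k0 c40 C1 t10 True] x0_t(1)[OF m00 k0 c40 C2 t20] by simp
      next
        case False
        then have F2: "phi_x m u t2 w2 \<noteq> X0 m u" using ex by simp
        have "t1 = psi_t m u (phi_x m u t1 w1) (phi_y m u t1 w1)" using fwd2(3)[OF t10 m00 k0 False] by simp
        also have "\<dots> = psi_t m u (phi_x m u t2 w2) (phi_y m u t2 w2)" using ex ey by simp
        also have "\<dots> = t2" using fwd2(3)[OF t20 m00 k0 F2] .
        finally show ?thesis .
      qed
      then have "(\<lambda>(a, b, c). tri_t a b c) X = (\<lambda>(a, b, c). tri_t a b c) Y"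
        unfolding X Y t1_def t2_def by simp
      then show "X = Y" using inj_onD[OF tri_inj[OF m0 u0 mu mq uq] _ HX HY] by blast
    qed
    have B2: "G \<subseteq> F ` heron_mu m u"
    proof
      fix p assume "p \<in> G"
      then obtain x y where pe: "p = (x, y)" and xq: "x \<in> \<rat>" and yq: "y \<in> \<rat>" and E: "onE m u x y"
        and lv: "line_val m u x y \<noteq> 0" and cA: "condA m u (psi_t m u x y)" and w0: "psi_w m u x y > 0"
        unfolding G_def by auto
      define t where "t = psi_t m u x y"
      define w where "w = psi_w m u x y"
      have t0: "t \<noteq> 0" using cA unfolding condA_def t_def by simp
      note b = bwd[OF E lv t0[unfolded t_def] m00 k0, folded t_def w_def]
      have tq: "t \<in> \<rat>" and wq: "w \<in> \<rat>" unfolding t_def w_def using rat_maps[OF mq uq xq yq xq xq] by auto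
      have Q: "Qpoly m u t = w^2" using b(1) unfolding onC_def by simp
      obtain a b c where H: "(a, b, c) \<in> heron_mu m u" and tt: "tri_t a b c = t"
        using tri_surj[OF m0 u0 mu mq uq tq cA[folded t_def] wq w0[folded w_def] Q] by blast
      note pp = tri_params[OF H m0 u0 mu mq uq, unfolded tt]
      have "(tri_w m u a b c)^2 = w^2" using pp Q by simp
      then have ww: "tri_w m u a b c = w" using pp(8) w0[folded w_def] by (simp add: power2_eq_iff_nonneg)
      have "F (a, b, c) = (x, y)" unfolding F_def using tt ww b(3) b(4) by simp
      then show "p \<in> F ` heron_mu m u" unfolding pe by (rule image_eqI[OF sym H])
    qed
    have B3: "F ` heron_mu m u \<subseteq> G \<union> {Ppt m u}"
    proof
      fix p assume "p \<in> F ` heron_mu m u"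
      then obtain a b c where H: "(a, b, c) \<in> heron_mu m u" and pe: "p = F (a, b, c)" by auto
      define t where "t = tri_t a b c"
      define w where "w = tri_w m u a b c"
      note pp = tri_params[OF H m0 u0 mu mq uq, folded t_def w_def]
      have pe': "p = (phi_x m u t w, phi_y m u t w)" unfolding pe F_def t_def w_def by simp
      have C: "onC m u t w" unfolding onC_def using pp by simp
      have t0: "t \<noteq> 0" using pp by simp
      show "p \<in> G \<union> {Ppt m u}"
      proof (cases "phi_x m u t w = X0 m u")
        case True
        have "p = (X0 m u, - m * kval m u * (X0 m u - X0 m u)/t - Lval m u * (X0 m u - nval m u))"
          unfolding pe' True[symmetric] unfolding phi_y_def True by simp
        then show ?thesis using Ppt_eq by simp
      next
        case False
        note f2 = fwd2[OF t0 m00 k0 False]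
        have r: "phi_x m u t w \<in> \<rat>" "phi_y m u t w \<in> \<rat>" using rat_maps[OF mq uq pp(1) pp(1) pp(1) pp(7)] by auto
        have "condA m u (psi_t m u (phi_x m u t w) (phi_y m u t w))" "psi_w m u (phi_x m u t w) (phi_y m u t w) > 0"
          unfolding f2(3) f2(4) using pp by auto
        then have "p \<in> G" unfolding pe' G_def using r fwd[OF C t0] f2(2) by simp
        then show ?thesis by simp
      qed
    qed
    show ?thesis unfolding Let_def F_def[symmetric] G_def[symmetric] by (intro conjI B1 B2 B3)
  qed
  show ?thesis by (intro conjI P1[unfolded TS_def] P2 P3 P4)
qed

end
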